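(* In the multiplexing scheme with $N\ge1$ homogeneous channels, blocklength $n>0$, common error probability $\epsilon\in(0,1)$ and waiting times $\mathbf{T}=(T_0,\dots,T_{N-1})^T$, let $Y_i$ be the time from a successful reception on channel $i$ to the next successful reception on any channel. Then $$\mathbb{E}[Y_i]=\frac{\sum_{j=0}^{N-1}\epsilon^jT_{(i+j)\bmod N}}{1-\epsilon^N},\qquad \sum_{i=0}^{N-1}\mathbb{E}[Y_i]=\frac{n}{1-\epsilon},$$ and the time-average AoI is $$\bar\Delta_{\mathrm{MP}}=\frac{1-\epsilon}{2n(1-\epsilon^N)}\,\mathbf{T}^T\mathbf{M}\mathbf{T}+n,$$ where $\mathbf{M}$ is the real symmetric circulant $N\times N$ matrix with entries $M_{r,s}=m_{(s-r)\bmod N}$, $m_j=\frac{\epsilon^j+\epsilon^{N-j}}{1-\epsilon}$ for $j=0,\dots,N-1$.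
   Context: Multiplexing (MP) scheme: time is continuous, in symbol durations; $N$ parallel channels; blocklength $n>0$; shifts $0=\delta_0\le\delta_1\le\dots\le\delta_{N-1}<n$. On channel $i$, for each integer $m\ge0$, a fresh update is generated at time $\delta_i+mn$ and successfully received at time $\delta_i+(m+1)n$ with probability $1-\epsilon$, independently across all transmissions and channels. The Age of Information is $\Delta(t)=t-r(t)$ with $r(t)$ the generation time of the most recently generated update received by time $t$, and $\bar\Delta_{\mathrm{MP}}=\lim_{T\to\infty}\frac1T\int_0^T\Delta(t)dt$. Waiting times: $T_i=\delta_{i+1}-\delta_i$ for $i\le N-2$, $T_{N-1}=n-\delta_{N-1}$. *)

theory Defs
  imports "HOL-Probability.Probability"
begin

text \<open>Transmissions are enumerated in the order
  k = m * N + i  (channel i = k mod N, transmission number m = k div N).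
  Transmission k is generated at delta i + m n and received at delta i + (m+1) n;
  these reception times are nondecreasing in k.\<close>

definition mp_gen_time :: "(nat \<Rightarrow> real) \<Rightarrow> nat \<Rightarrow> nat \<Rightarrow> nat \<Rightarrow> real" where
  "mp_gen_time \<delta> n N k = \<delta> (k mod N) + real (k div N) * real n"

definition mp_recv_time :: "(nat \<Rightarrow> real) \<Rightarrow> nat \<Rightarrow> nat \<Rightarrow> nat \<Rightarrow> real" where
  "mp_recv_time \<delta> n N k = \<delta> (k mod N) + real (k div N + 1) * real n"

definition mp_succ :: "(nat \<times> nat \<Rightarrow> 'a \<Rightarrow> bool) \<Rightarrow> nat \<Rightarrow> 'a \<Rightarrow> nat \<Rightarrow> bool" where
  "mp_succ X N \<omega> k = X (k mod N, k div N) \<omega>"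

definition mp_next_succ :: "(nat \<times> nat \<Rightarrow> 'a \<Rightarrow> bool) \<Rightarrow> nat \<Rightarrow> 'a \<Rightarrow> nat \<Rightarrow> nat" where
  "mp_next_succ X N \<omega> k = (LEAST k'. k < k' \<and> mp_succ X N \<omega> k')"

definition mp_Y :: "(nat \<Rightarrow> real) \<Rightarrow> nat \<Rightarrow> nat \<Rightarrow> (nat \<times> nat \<Rightarrow> 'a \<Rightarrow> bool) \<Rightarrow> nat \<Rightarrow> 'a \<Rightarrow> real" where
  "mp_Y \<delta> n N X i \<omega> = mp_recv_time \<delta> n N (mp_next_succ X N \<omega> i) - mp_recv_time \<delta> n N i"

definition cond_mean :: "'a measure \<Rightarrow> 'a set \<Rightarrow> ('a \<Rightarrow> real) \<Rightarrow> real" where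
  "cond_mean M A f = (\<integral>\<omega>. indicator A \<omega> * f \<omega> \<partial>M) / measure M A"

definition mp_latest_gen :: "(nat \<Rightarrow> real) \<Rightarrow> nat \<Rightarrow> nat \<Rightarrow> (nat \<times> nat \<Rightarrow> 'a \<Rightarrow> bool) \<Rightarrow> 'a \<Rightarrow> real \<Rightarrow> real" where
  "mp_latest_gen \<delta> n N X \<omega> t =
     (let S = {mp_gen_time \<delta> n N k | k. mp_succ X N \<omega> k \<and> mp_recv_time \<delta> n N k \<le> t}
      in if S = {} then 0 else Max S)"

definition mp_aoi :: "(nat \<Rightarrow> real) \<Rightarrow> nat \<Rightarrow> nat \<Rightarrow> (nat \<times> nat \<Rightarrow> 'a \<Rightarrow> bool) \<Rightarrow> 'a \<Rightarrow> real \<Rightarrow> real" where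
  "mp_aoi \<delta> n N X \<omega> t = t - mp_latest_gen \<delta> n N X \<omega> t"

definition mp_T :: "(nat \<Rightarrow> real) \<Rightarrow> nat \<Rightarrow> nat \<Rightarrow> nat \<Rightarrow> real" where
  "mp_T \<delta> n N i = (if i + 2 \<le> N then \<delta> (i + 1) - \<delta> i else real n - \<delta> (N - 1))"

definition mp_m :: "real \<Rightarrow> nat \<Rightarrow> nat \<Rightarrow> real" where
  "mp_m \<epsilon> N j = (\<epsilon> ^ j + \<epsilon> ^ (N - j)) / (1 - \<epsilon>)"

definition mp_M :: "real \<Rightarrow> nat \<Rightarrow> nat \<Rightarrow> nat \<Rightarrow> real" where
  "mp_M \<epsilon> N r s = mp_m \<epsilon> N ((s + N - r) mod N)"

definition quad_form :: "nat \<Rightarrow> (nat \<Rightarrow> nat \<Rightarrow> real) \<Rightarrow> (nat \<Rightarrow> real) \<Rightarrow> real" where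
  "quad_form N A v = (\<Sum>r<N. \<Sum>s<N. v r * A r s * v s)"

end

theory Submission
  imports Defs "HOL-Probability.Probability" "HOL-Real_Asymp.Real_Asymp"
begin


locale mpl = prob_space M for M :: "'a measure" +
  fixes X :: "nat \<times> nat \<Rightarrow> 'a \<Rightarrow> bool" and N n :: nat and \<delta> :: "nat \<Rightarrow> real" and \<epsilon> :: real
  assumes N1: "N \<ge> 1" and npos: "n > 0" and d0: "\<delta> 0 = 0"
    and dmono: "\<And>i. i + 1 < N \<Longrightarrow> \<delta> i \<le> \<delta> (i + 1)"
    and dlt: "\<delta> (N - 1) < real n"
    and e0: "0 < \<epsilon>" and e1: "\<epsilon> < 1"
    and indepX: "indep_vars (\<lambda>_. count_space UNIV) X ({..<N} \<times> UNIV)"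
    and probX: "\<And>i m. i < N \<Longrightarrow> measure M {\<omega> \<in> space M. X (i, m) \<omega>} = 1 - \<epsilon>"
begin

definition x :: "nat \<Rightarrow> 'a \<Rightarrow> bool" where "x u \<omega> = X (u mod N, u div N) \<omega>"
definition \<tau> :: "nat \<Rightarrow> real" where "\<tau> u = mp_T \<delta> n N (u mod N)"
definition r :: "nat \<Rightarrow> real" where "r u = mp_recv_time \<delta> n N u"

lemma Npos: "N > 0" using N1 by simp

lemma d_mono_le: "i \<le> j \<Longrightarrow> j < N \<Longrightarrow> \<delta> i \<le> \<delta> j"
proof (induction j)
  case 0 then show ?case by simp
next
  case (Suc j)
  then show ?case
    using dmono[of j] by (cases "i = Suc j") auto
qed

lemma d_nonneg: "i < N \<Longrightarrow> 0 \<le> \<delta> i"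
  using d_mono_le[of 0 i] d0 by simp

lemma d_le: "i < N \<Longrightarrow> \<delta> i \<le> \<delta> (N - 1)"
  using d_mono_le[of i "N - 1"] Npos by simp

lemma d_lt_n: "i < N \<Longrightarrow> \<delta> i < real n"
  using d_le dlt by fastforce

lemma T_nonneg: "0 \<le> mp_T \<delta> n N i"
  unfolding mp_T_def using dmono[of i] dlt by auto

lemma T_le: "mp_T \<delta> n N i \<le> real n"
  unfolding mp_T_def using d_nonneg[of i] d_lt_n[of "i+1"] d_nonneg[of "N - 1"] Npos by auto

lemma tau_nonneg: "0 \<le> \<tau> u" unfolding \<tau>_def by (rule T_nonneg)
lemma tau_le: "\<tau> u \<le> real n" unfolding \<tau>_def by (rule T_le)

lemma T_sum: "(\<Sum>i<N. mp_T \<delta> n N i) = real n"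
proof -
  obtain N' where NN: "N = Suc N'" using Npos by (cases N) auto
  have "(\<Sum>i<N. mp_T \<delta> n N i) = (\<Sum>i<N'. mp_T \<delta> n N i) + mp_T \<delta> n N N'"
    using NN by simp
  also have "(\<Sum>i<N'. mp_T \<delta> n N i) = (\<Sum>i<N'. \<delta> (Suc i) - \<delta> i)"
    by (rule sum.cong) (auto simp: mp_T_def NN)
  also have "\<dots> = \<delta> N' - \<delta> 0" by (rule sum_lessThan_telescope)
  finally show ?thesis using NN d0 by (simp add: mp_T_def)
qed

lemma r_Suc: "r (Suc u) = r u + \<tau> u"
proof (cases "Suc (u mod N) < N")
  case True
  then have "Suc u mod N = Suc (u mod N)" "Suc u div N = u div N"
    by (simp_all add: mod_Suc div_Suc)
  then show ?thesis using True
    by (simp add: r_def \<tau>_def mp_recv_time_def mp_T_def)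
next
  case False
  then have m: "u mod N = N - 1" using Npos
    by (metis Suc_lessI diff_Suc_1 mod_less_divisor)
  then have "Suc u mod N = 0" "Suc u div N = Suc (u div N)" using Npos False
    by (auto simp add: mod_Suc div_Suc)
  then show ?thesis using False m d0
    by (simp add: r_def \<tau>_def mp_recv_time_def mp_T_def algebra_simps)
qed

lemma r_0: "r 0 = real n"
  by (simp add: r_def mp_recv_time_def d0)

lemma r_sum: "r u = real n + (\<Sum>l<u. \<tau> l)"
  by (induction u) (simp_all add: r_0 r_Suc)

lemma r_mono: "u \<le> v \<Longrightarrow> r u \<le> r v"
  unfolding r_sum by (auto intro!: sum_mono2 tau_nonneg)

lemma r_ge: "real n \<le> r u" using r_mono[of 0 u] r_0 by simp

lemma r_diff: "u \<le> v \<Longrightarrow> r v - r u = (\<Sum>l\<in>{u..<v}. \<tau> l)"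
proof -
  assume uv: "u \<le> v"
  have "{..<v} = {..<u} \<union> {u..<v}" using uv by auto
  then have "(\<Sum>l<v. \<tau> l) = (\<Sum>l<u. \<tau> l) + (\<Sum>l\<in>{u..<v}. \<tau> l)"
    by (simp add: sum.union_disjoint ivl_disj_int)
  then show ?thesis unfolding r_sum by simp
qed

lemma r_multN: "r (m * N) = real (m + 1) * real n"
  using Npos by (simp add: r_def mp_recv_time_def d0)

lemma gen_time: "mp_gen_time \<delta> n N u = r u - real n"
  by (simp add: r_def mp_recv_time_def mp_gen_time_def algebra_simps)

end


context mpl begin

lemma x_eq: "i < N \<Longrightarrow> x i = X (i, 0)"
  by (rule ext) (simp add: x_def)

lemma X_meas: "i < N \<Longrightarrow> X (i, m) \<in> measurable M (count_space UNIV)"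
  using indepX unfolding indep_vars_def by auto

lemma x_meas[measurable]: "x u \<in> measurable M (count_space UNIV)"
proof -
  have "(\<lambda>\<omega>. X (u mod N, u div N) \<omega>) \<in> measurable M (count_space UNIV)"
    using X_meas[of "u mod N" "u div N"] Npos by simp
  then show ?thesis by (simp add: x_def[abs_def])
qed

lemma x_pred[measurable]: "Measurable.pred M (x u)"
  using x_meas by (simp add: pred_def)

lemma x_indep: "indep_vars (\<lambda>_. count_space UNIV) x UNIV"
proof -
  define p where "p u = (u mod N, u div N)" for u :: nat
  have inj: "inj p"
  proof (rule injI)
    fix a b assume "p a = p b"
    then have "a mod N = b mod N" "a div N = b div N" by (auto simp: p_def)
    then show "a = b" by (metis div_mult_mod_eq)
  qed
  have "indep_vars (\<lambda>j. PiM {p j} (\<lambda>_. count_space UNIV)) (\<lambda>j \<omega>. restrict (\<lambda>i. X i \<omega>) {p j}) UNIV"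
    apply (rule indep_vars_restrict[OF indepX])
    subgoal using Npos by (auto simp: p_def)
    subgoal using inj by (auto simp: disjoint_family_on_def inj_eq)
    done
  then have "indep_vars (\<lambda>_. count_space UNIV) (\<lambda>j \<omega>. (\<lambda>f. f (p j)) (restrict (\<lambda>i. X i \<omega>) {p j})) UNIV"
    by (rule indep_vars_compose2) (rule measurable_component_singleton, simp)
  then show ?thesis
    by (rule indep_vars_cong[THEN iffD1, rotated -1]) (auto simp: x_def[abs_def] p_def)
qed

lemma prob_x: "prob {\<omega> \<in> space M. x u \<omega>} = 1 - \<epsilon>"
  using probX[of "u mod N" "u div N"] Npos by (simp add: x_def)

lemma prob_notx: "prob {\<omega> \<in> space M. \<not> x u \<omega>} = \<epsilon>"
proof -
  have "{\<omega> \<in> space M. \<not> x u \<omega>} = space M - {\<omega> \<in> space M. x u \<omega>}" by auto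
  then have "prob {\<omega> \<in> space M. \<not> x u \<omega>} = 1 - prob {\<omega> \<in> space M. x u \<omega>}"
    by (simp add: prob_compl)
  then show ?thesis using prob_x by simp
qed

lemma prob_pattern:
  assumes fin: "finite S" "finite F" and dis: "S \<inter> F = {}"
  shows "prob {\<omega> \<in> space M. (\<forall>u\<in>S. x u \<omega>) \<and> (\<forall>u\<in>F. \<not> x u \<omega>)} = (1 - \<epsilon>) ^ card S * \<epsilon> ^ card F"
proof (cases "S \<union> F = {}")
  case True then show ?thesis by (simp add: prob_space)
next
  case False
  define A where "A u = (if u \<in> S then {True} else {False})" for u
  have "prob (\<Inter>u\<in>S \<union> F. x u -` A u \<inter> space M) = (\<Prod>u\<in>S \<union> F. prob (x u -` A u \<inter> space M))"
    by (rule indep_varsD[OF x_indep]) (use False fin in auto)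
  also have "\<dots> = (\<Prod>u\<in>S. prob (x u -` A u \<inter> space M)) * (\<Prod>u\<in>F. prob (x u -` A u \<inter> space M))"
    using fin dis by (simp add: prod.union_disjoint)
  also have "(\<Prod>u\<in>S. prob (x u -` A u \<inter> space M)) = (\<Prod>u\<in>S. 1 - \<epsilon>)"
  proof (rule prod.cong)
    fix u assume "u \<in> S"
    then have "x u -` A u \<inter> space M = {\<omega> \<in> space M. x u \<omega>}" by (auto simp: A_def)
    then show "prob (x u -` A u \<inter> space M) = 1 - \<epsilon>" using prob_x by simp
  qed simp
  also have "(\<Prod>u\<in>F. prob (x u -` A u \<inter> space M)) = (\<Prod>u\<in>F. \<epsilon>)"
  proof (rule prod.cong)
    fix u assume "u \<in> F"
    then have "u \<notin> S" using dis by auto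
    then have "x u -` A u \<inter> space M = {\<omega> \<in> space M. \<not> x u \<omega>}" by (auto simp: A_def)
    then show "prob (x u -` A u \<inter> space M) = \<epsilon>" using prob_notx by simp
  qed simp
  also have "(\<Inter>u\<in>S \<union> F. x u -` A u \<inter> space M) = {\<omega> \<in> space M. (\<forall>u\<in>S. x u \<omega>) \<and> (\<forall>u\<in>F. \<not> x u \<omega>)}"
  proof (intro set_eqI iffI)
    fix \<omega> assume h: "\<omega> \<in> (\<Inter>u\<in>S \<union> F. x u -` A u \<inter> space M)"
    have hh: "x u \<omega> \<in> A u" if "u \<in> S \<union> F" for u using h that by blast
    have "\<forall>u\<in>S. x u \<omega>"
    proof
      fix u assume "u \<in> S" then show "x u \<omega>" using hh[of u] by (simp add: A_def)
    qed
    moreover have "\<forall>u\<in>F. \<not> x u \<omega>"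
    proof
      fix u assume u: "u \<in> F"
      then have "u \<notin> S" using dis by auto
      then show "\<not> x u \<omega>" using hh[of u] u by (auto simp: A_def)
    qed
    ultimately show "\<omega> \<in> {\<omega> \<in> space M. (\<forall>u\<in>S. x u \<omega>) \<and> (\<forall>u\<in>F. \<not> x u \<omega>)}"
      using h False by blast
  next
    fix \<omega> assume "\<omega> \<in> {\<omega> \<in> space M. (\<forall>u\<in>S. x u \<omega>) \<and> (\<forall>u\<in>F. \<not> x u \<omega>)}"
    then show "\<omega> \<in> (\<Inter>u\<in>S \<union> F. x u -` A u \<inter> space M)" by (auto simp: A_def)
  qed
  finally show ?thesis by simp
qed

lemma prob_fails:
  assumes "finite F"
  shows "prob {\<omega> \<in> space M. \<forall>u\<in>F. \<not> x u \<omega>} = \<epsilon> ^ card F"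
  using prob_pattern[of "{}" F] assms by simp

end


lemma mod_shift_inv: assumes "0 < (N::nat)" "i < N" shows "((i + (N - j mod N)) mod N + j) mod N = i"
proof -
  have jm: "j mod N < N" using assms by simp
  have "((i + (N - j mod N)) mod N + j) mod N = (i + (N - j mod N) + j) mod N"
    by (simp add: mod_add_left_eq)
  also have "i + (N - j mod N) + j = i + N + N * (j div N)"
    using jm mult_div_mod_eq[of N j] by linarith
  also have "\<dots> mod N = i" using assms by simp
  finally show ?thesis .
qed
lemma mod_shift_inv2: assumes "0 < (N::nat)" "i < N" shows "((i + j) mod N + (N - j mod N)) mod N = i"
proof -
  have jm: "j mod N < N" using assms by simp
  have "((i + j) mod N + (N - j mod N)) mod N = (i + j + (N - j mod N)) mod N"
    by (simp add: mod_add_left_eq)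
  also have "i + j + (N - j mod N) = i + N + N * (j div N)"
    using jm mult_div_mod_eq[of N j] by linarith
  also have "\<dots> mod N = i" using assms by simp
  finally show ?thesis .
qed
lemma sum_mod_shift:
  assumes "0 < (N::nat)"
  shows "(\<Sum>i<N. f ((i + j) mod N)) = (\<Sum>i<N. f i)"
  by (rule sum.reindex_bij_witness[where j="\<lambda>i. (i + j) mod N" and i="\<lambda>i. (i + (N - j mod N)) mod N"])
     (use assms mod_shift_inv mod_shift_inv2 in auto)

lemma periodic_suminf:
  fixes f :: "nat \<Rightarrow> real"
  assumes sf: "summable f" and N: "0 < N" and per: "\<And>l. f (l + N) = c * f l" and c: "\<bar>c\<bar> < 1"
  shows "suminf f = (\<Sum>l<N. f l) / (1 - c)"
proof -
  have blk: "sum f {q * N..<q * N + N} = c ^ q * (\<Sum>l<N. f l)" for q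
  proof (induction q)
    case 0 then show ?case by (simp add: lessThan_atLeast0)
  next
    case (Suc q)
    have "sum f {Suc q * N..<Suc q * N + N} = (\<Sum>l\<in>{q * N..<q * N + N}. f (l + N))"
      using sum.shift_bounds_nat_ivl[of f "q*N" N "q*N+N"] by (simp add: algebra_simps)
    also have "\<dots> = c * sum f {q * N..<q * N + N}" by (simp add: per sum_distrib_left)
    finally show ?case using Suc by simp
  qed
  have "(\<lambda>q. sum f {q * N..<q * N + N}) sums suminf f"
    using sums_group[OF summable_sums[OF sf] N] .
  then have "(\<lambda>q. c ^ q * (\<Sum>l<N. f l)) sums suminf f" by (simp add: blk)
  moreover have "(\<lambda>q. c ^ q * (\<Sum>l<N. f l)) sums ((\<Sum>l<N. f l) / (1 - c))"
    using sums_mult2[OF geometric_sums[of c], of "\<Sum>l<N. f l"] c by simp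
  ultimately show ?thesis using sums_unique2 by blast
qed

context mpl begin

lemma succ_eq: "mp_succ X N \<omega> k = x k \<omega>"
  by (simp add: mp_succ_def x_def)

lemma Y_eq: "mp_Y \<delta> n N X i \<omega> = r (LEAST k. i < k \<and> x k \<omega>) - r i"
  by (simp add: mp_Y_def mp_next_succ_def succ_eq r_def)

lemma Y_meas[measurable]: "(\<lambda>\<omega>. mp_Y \<delta> n N X i \<omega>) \<in> borel_measurable M"
proof -
  have "(\<lambda>\<omega>. LEAST k. i < k \<and> x k \<omega>) \<in> measurable M (count_space UNIV)"
    by measurable
  then have "(\<lambda>\<omega>. r (LEAST k. i < k \<and> x k \<omega>)) \<in> borel_measurable M"
    by (rule measurable_compose) simp
  then show ?thesis unfolding Y_eq by measurable
qed

lemma null_no_succ: "{\<omega> \<in> space M. \<forall>u>i. \<not> x u \<omega>} \<in> null_sets M"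
proof -
  let ?B = "{\<omega> \<in> space M. \<forall>u>i. \<not> x u \<omega>}"
  have Bs: "?B \<in> sets M" by measurable
  have le: "prob ?B \<le> \<epsilon> ^ l" for l
  proof -
    have "?B \<subseteq> {\<omega> \<in> space M. \<forall>u\<in>{Suc i..i+l}. \<not> x u \<omega>}" by auto
    then have "prob ?B \<le> prob {\<omega> \<in> space M. \<forall>u\<in>{Suc i..i+l}. \<not> x u \<omega>}"
      by (intro finite_measure_mono) measurable
    also have "\<dots> = \<epsilon> ^ l" by (simp add: prob_fails)
    finally show ?thesis .
  qed
  have "(\<lambda>l. \<epsilon> ^ l) \<longlonglongrightarrow> 0" using e0 e1 by (intro LIMSEQ_power_zero) simp
  then have "prob ?B \<le> 0" by (rule LIMSEQ_le_const) (use le in auto)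
  then have "prob ?B = 0" using measure_nonneg[of M ?B] by linarith
  then show ?thesis using Bs by (simp add: null_sets_def emeasure_eq_measure)
qed

lemma AE_succ: "AE \<omega> in M. \<exists>u>i. x u \<omega>"
  by (rule AE_I'[OF null_no_succ]) auto

definition Ev :: "nat \<Rightarrow> nat \<Rightarrow> 'a set" where
  "Ev i l = {\<omega> \<in> space M. x i \<omega> \<and> (\<forall>u\<in>{Suc i..i+l}. \<not> x u \<omega>)}"

lemma Ev_sets[measurable]: "Ev i l \<in> sets M"
  unfolding Ev_def by measurable

lemma prob_Ev: "prob (Ev i l) = (1 - \<epsilon>) * \<epsilon> ^ l"
  using prob_pattern[of "{i}" "{Suc i..i+l}"] by (simp add: Ev_def)

lemma Y_series:
  assumes "\<exists>u>i. x u \<omega>"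
  shows "indicator {\<omega> \<in> space M. x i \<omega>} \<omega> * mp_Y \<delta> n N X i \<omega> = (\<Sum>l. \<tau> (i + l) * indicator (Ev i l) \<omega>)"
proof -
  define nx where "nx = (LEAST k. i < k \<and> x k \<omega>)"
  have nx: "i < nx" "x nx \<omega>" using LeastI_ex[of "\<lambda>k. i < k \<and> x k \<omega>"] assms by (auto simp: nx_def)
  have nxl: "\<not> x u \<omega>" if "i < u" "u < nx" for u
    using not_less_Least[of u "\<lambda>k. i < k \<and> x k \<omega>"] that by (auto simp: nx_def)
  have gen: "(\<Sum>l<nx - i. \<tau> (i + l) * c) = c * (\<Sum>l<nx-i. \<tau> (l+i))" for c :: real
    by (simp add: sum_distrib_left add.commute mult.commute)
  have "(\<Sum>l. \<tau> (i + l) * indicator (Ev i l) \<omega>) = (\<Sum>l<nx - i. \<tau> (i + l) * indicator (Ev i l) \<omega>)"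
  proof (rule suminf_finite)
    fix l assume "l \<notin> {..<nx - i}"
    then have "nx \<in> {Suc i..i+l}" using nx by auto
    then have "\<omega> \<notin> Ev i l" using nx by (auto simp: Ev_def)
    then show "\<tau> (i + l) * indicator (Ev i l) \<omega> = 0" by simp
  qed simp
  also have "\<dots> = (\<Sum>l<nx - i. \<tau> (i + l) * indicator {\<omega> \<in> space M. x i \<omega>} \<omega>)"
  proof (rule sum.cong)
    fix l assume "l \<in> {..<nx - i}"
    then have "\<forall>u\<in>{Suc i..i+l}. \<not> x u \<omega>" using nxl by auto
    then show "\<tau> (i + l) * indicator (Ev i l) \<omega> = \<tau> (i + l) * indicator {\<omega> \<in> space M. x i \<omega>} \<omega>"
      by (auto simp: Ev_def indicator_def)
  qed simp
  also have "\<dots> = indicator {\<omega> \<in> space M. x i \<omega>} \<omega> * (\<Sum>l<nx - i. \<tau> (l + i))"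
    using gen[of "indicator {\<omega> \<in> space M. x i \<omega>} \<omega>"] .
  also have "(\<Sum>l<nx - i. \<tau> (l + i)) = (\<Sum>l\<in>{i..<nx}. \<tau> l)"
    using sum.shift_bounds_nat_ivl[of \<tau> 0 i "nx - i"] nx by (simp add: lessThan_atLeast0)
  also have "\<dots> = r nx - r i" using r_diff[of i nx] nx by simp
  also have "\<dots> = mp_Y \<delta> n N X i \<omega>" by (simp add: Y_eq nx_def)
  finally show ?thesis by simp
qed

lemma integral_Y:
  "(\<integral>\<omega>. indicator {\<omega> \<in> space M. x i \<omega>} \<omega> * mp_Y \<delta> n N X i \<omega> \<partial>M) = (\<Sum>l. \<tau> (i + l) * ((1 - \<epsilon>) * \<epsilon> ^ l))"
proof -
  let ?f = "\<lambda>l \<omega>. \<tau> (i + l) * indicator (Ev i l) \<omega>"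
  have int: "integrable M (?f l)" for l
    by (intro integrable_mult_right integrable_real_indicator) (auto simp: emeasure_eq_measure)
  have intf: "integral\<^sup>L M (?f l) = \<tau> (i + l) * ((1 - \<epsilon>) * \<epsilon> ^ l)" for l
    by (simp add: prob_Ev)
  have sumb: "summable (\<lambda>l. real n * \<epsilon> ^ l)"
    using e0 e1 by (intro summable_mult summable_geometric) simp
  have sum1: "summable (\<lambda>l. \<integral>\<omega>. norm (?f l \<omega>) \<partial>M)"
  proof (rule summable_comparison_test[OF _ sumb], intro exI allI impI)
    fix l :: nat
    have "(\<integral>\<omega>. norm (?f l \<omega>) \<partial>M) = integral\<^sup>L M (?f l)"
      by (rule Bochner_Integration.integral_cong[OF refl]) (simp add: abs_mult tau_nonneg)
    also have "\<dots> \<le> real n * \<epsilon> ^ l"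
      unfolding intf using tau_le[of "i+l"] tau_nonneg[of "i+l"] e0 e1
      by (intro mult_mono) (auto intro!: mult_left_le_one_le)
    finally show "norm (\<integral>\<omega>. norm (?f l \<omega>) \<partial>M) \<le> real n * \<epsilon> ^ l" by simp
  qed
  have sumAE: "AE \<omega> in M. summable (\<lambda>l. norm (?f l \<omega>))"
    using AE_succ[of i]
  proof eventually_elim
    case (elim \<omega>)
    then obtain u where u: "i < u" "x u \<omega>" by auto
    show ?case
    proof (rule summable_finite[of "{..<u}"])
      fix l assume "l \<notin> {..<u}"
      then have "u \<in> {Suc i..i+l}" using u by auto
      then have "\<omega> \<notin> Ev i l" using u by (auto simp: Ev_def)
      then show "norm (?f l \<omega>) = 0" by simp
    qed simp
  qed
  have "(\<integral>\<omega>. indicator {\<omega> \<in> space M. x i \<omega>} \<omega> * mp_Y \<delta> n N X i \<omega> \<partial>M) = (\<integral>\<omega>. (\<Sum>l. ?f l \<omega>) \<partial>M)"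
  proof (rule integral_cong_AE)
    show "AE \<omega> in M. indicator {\<omega> \<in> space M. x i \<omega>} \<omega> * mp_Y \<delta> n N X i \<omega> = (\<Sum>l. ?f l \<omega>)"
      using AE_succ[of i] by eventually_elim (rule Y_series)
  qed measurable
  also have "\<dots> = (\<Sum>l. integral\<^sup>L M (?f l))"
    by (rule integral_suminf[OF int sumAE sum1])
  finally show ?thesis by (simp add: intf prob_Ev)
qed

lemma cond_mean_Y:
  assumes i: "i < N"
  shows "cond_mean M {\<omega> \<in> space M. X (i, 0) \<omega>} (mp_Y \<delta> n N X i)
          = (\<Sum>j<N. \<epsilon> ^ j * mp_T \<delta> n N ((i + j) mod N)) / (1 - \<epsilon> ^ N)"
proof -
  have A: "{\<omega> \<in> space M. X (i, 0) \<omega>} = {\<omega> \<in> space M. x i \<omega>}" using x_eq[OF i] by simp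
  have sumb: "summable (\<lambda>l. real n * \<epsilon> ^ l)"
    using e0 e1 by (intro summable_mult summable_geometric) simp
  have sf: "summable (\<lambda>l. \<epsilon> ^ l * \<tau> (i + l))"
    by (rule summable_comparison_test[OF _ sumb])
       (use e0 tau_nonneg tau_le in \<open>auto intro!: exI mult_left_mono simp: mult.commute\<close>)
  have "(\<Sum>l. \<tau> (i + l) * ((1 - \<epsilon>) * \<epsilon> ^ l)) = (1 - \<epsilon>) * (\<Sum>l. \<epsilon> ^ l * \<tau> (i + l))"
    using suminf_mult[OF sf, of "1 - \<epsilon>"] by (simp add: algebra_simps)
  moreover have "(\<Sum>l. \<epsilon> ^ l * \<tau> (i + l)) = (\<Sum>l<N. \<epsilon> ^ l * \<tau> (i + l)) / (1 - \<epsilon> ^ N)"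
  proof (rule periodic_suminf[OF sf Npos])
    show "\<And>l. \<epsilon> ^ (l + N) * \<tau> (i + (l + N)) = \<epsilon> ^ N * (\<epsilon> ^ l * \<tau> (i + l))"
    proof -
      fix l
      have "(i + (l + N)) mod N = (i + l) mod N" by (metis add.assoc mod_add_self2)
      then show "\<epsilon> ^ (l + N) * \<tau> (i + (l + N)) = \<epsilon> ^ N * (\<epsilon> ^ l * \<tau> (i + l))"
        by (simp add: \<tau>_def power_add)
    qed
    show "\<bar>\<epsilon> ^ N\<bar> < 1" using e0 e1 Npos by (simp add: power_less_one_iff)
  qed
  moreover have "measure M {\<omega> \<in> space M. x i \<omega>} = 1 - \<epsilon>" by (rule prob_x)
  ultimately show ?thesis
    using e1 by (simp add: cond_mean_def A integral_Y \<tau>_def)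
qed

lemma sum_cond_mean:
  "(\<Sum>i<N. cond_mean M {\<omega> \<in> space M. X (i, 0) \<omega>} (mp_Y \<delta> n N X i)) = real n / (1 - \<epsilon>)"
proof -
  have eq3: "(\<Sum>i<N. mp_T \<delta> n N ((i + j) mod N)) = real n" for j
    using sum_mod_shift[OF Npos, of "mp_T \<delta> n N" j] T_sum by simp
  have eq2: "(\<Sum>i<N. \<Sum>j<N. \<epsilon> ^ j * mp_T \<delta> n N ((i + j) mod N)) = (\<Sum>j<N. \<epsilon> ^ j * real n)"
    by (subst sum.swap) (simp add: sum_distrib_left[symmetric] eq3)
  have "(\<Sum>i<N. cond_mean M {\<omega> \<in> space M. X (i, 0) \<omega>} (mp_Y \<delta> n N X i))
      = (\<Sum>i<N. (\<Sum>j<N. \<epsilon> ^ j * mp_T \<delta> n N ((i + j) mod N)) / (1 - \<epsilon> ^ N))"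
    by (rule sum.cong) (simp_all add: cond_mean_Y)
  also have "\<dots> = (\<Sum>i<N. \<Sum>j<N. \<epsilon> ^ j * mp_T \<delta> n N ((i + j) mod N)) / (1 - \<epsilon> ^ N)"
    by (simp only: sum_divide_distrib)
  also have "\<dots> = (\<Sum>j<N. \<epsilon> ^ j * real n) / (1 - \<epsilon> ^ N)" by (simp only: eq2)
  also have "(\<Sum>j<N. \<epsilon> ^ j * real n) = real n * (\<Sum>j<N. \<epsilon> ^ j)"
    by (simp add: sum_distrib_left mult.commute)
  also have "(\<Sum>j<N. \<epsilon> ^ j) = (1 - \<epsilon> ^ N) / (1 - \<epsilon>)"
    using e1 by (simp add: sum_gp_strict)
  finally have "(\<Sum>i<N. cond_mean M {\<omega> \<in> space M. X (i, 0) \<omega>} (mp_Y \<delta> n N X i)) = real n * ((1 - \<epsilon> ^ N) / (1 - \<epsilon>)) / (1 - \<epsilon> ^ N)" .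
  moreover have "\<epsilon> ^ N < 1" using e0 e1 Npos by (simp add: power_less_one_iff)
  ultimately show ?thesis by simp
qed

end


context mpl begin

definition lat :: "nat \<Rightarrow> 'a \<Rightarrow> real" where
  "lat k \<omega> = (if \<exists>u\<le>k. x u \<omega> then r (Max {u. u \<le> k \<and> x u \<omega>}) - real n else 0)"

definition piece :: "nat \<Rightarrow> 'a \<Rightarrow> real" where
  "piece k \<omega> = (\<tau> k)\<^sup>2 / 2 + \<tau> k * (r k - lat k \<omega>)"

definition Rk :: "nat \<Rightarrow> 'a \<Rightarrow> real" where
  "Rk k \<omega> = (\<Sum>j\<in>{1..k}. \<tau> (k - j) * of_bool (\<forall>u\<in>{Suc k - j..k}. \<not> x u \<omega>))"

definition cc :: "nat \<Rightarrow> 'a \<Rightarrow> real" where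
  "cc k \<omega> = \<tau> k * (real n + \<tau> k / 2) + \<tau> k * Rk k \<omega>"

lemma r_unbounded: "\<exists>K. t < r K"
proof -
  obtain m :: nat where m: "t / real n < real m" using reals_Archimedean2 by blast
  have "t < real m * real n" using m npos by (simp add: field_simps)
  also have "\<dots> \<le> r (m * N)" using r_multN[of m] npos by simp
  finally show ?thesis by blast
qed

lemma locate: assumes "r 0 \<le> t" shows "\<exists>k. r k \<le> t \<and> t < r (Suc k)"
proof -
  obtain K where K: "t < r K" using r_unbounded by blast
  define K0 where "K0 = (LEAST K. t < r K)"
  have K0: "t < r K0" using LeastI[of "\<lambda>K. t < r K", OF K] by (simp add: K0_def)
  have "K0 \<noteq> 0"
  proof
    assume "K0 = 0" then show False using K0 assms by simp
  qed
  then obtain k where k: "K0 = Suc k" by (cases K0) auto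
  have "\<not> t < r k" using not_less_Least[of k "\<lambda>K. t < r K"] k by (simp add: K0_def)
  then show ?thesis using K0 k by (metis not_less)
qed

lemma latest_piece:
  assumes t: "r k \<le> t" "t < r (Suc k)"
  shows "mp_latest_gen \<delta> n N X \<omega> t = lat k \<omega>"
proof -
  have iff: "r u \<le> t \<longleftrightarrow> u \<le> k" for u
  proof
    assume "r u \<le> t"
    show "u \<le> k"
    proof (rule ccontr)
      assume "\<not> u \<le> k"
      then have "r (Suc k) \<le> r u" by (intro r_mono) simp
      then show False using t \<open>r u \<le> t\<close> by simp
    qed
  next
    assume "u \<le> k" then show "r u \<le> t" using r_mono[of u k] t by simp
  qed
  have S: "{mp_gen_time \<delta> n N u |u. mp_succ X N \<omega> u \<and> mp_recv_time \<delta> n N u \<le> t}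
      = (\<lambda>u. r u - real n) ` {u. u \<le> k \<and> x u \<omega>}"
    using iff by (auto simp: gen_time succ_eq r_def[symmetric])
  show ?thesis
  proof (cases "\<exists>u\<le>k. x u \<omega>")
    case True
    have mono: "mono (\<lambda>u. r u - real n)" by (auto intro!: monoI r_mono)
    have fin: "finite {u. u \<le> k \<and> x u \<omega>}" by simp
    have ne: "{u. u \<le> k \<and> x u \<omega>} \<noteq> {}" using True by auto
    have l: "lat k \<omega> = r (Max {u. u \<le> k \<and> x u \<omega>}) - real n" unfolding lat_def by (rule if_P[OF True])
    have "mp_latest_gen \<delta> n N X \<omega> t = Max ((\<lambda>u. r u - real n) ` {u. u \<le> k \<and> x u \<omega>})"
      unfolding mp_latest_gen_def Let_def S by (rule if_not_P) (use ne in blast)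
    then show ?thesis using l mono_Max_commute[OF mono fin ne] by simp
  next
    case False
    then show ?thesis unfolding mp_latest_gen_def Let_def S lat_def by auto
  qed
qed

lemma latest_before: assumes "t < r 0" shows "mp_latest_gen \<delta> n N X \<omega> t = 0"
proof -
  have "r u \<le> t \<Longrightarrow> False" for u using r_mono[of 0 u] assms by simp
  then have "{mp_gen_time \<delta> n N u |u. mp_succ X N \<omega> u \<and> mp_recv_time \<delta> n N u \<le> t} = {}"
    by (auto simp: r_def[symmetric])
  then show ?thesis unfolding mp_latest_gen_def Let_def by simp
qed

lemma lat_le: "lat k \<omega> \<le> r k - real n \<or> lat k \<omega> = 0"
proof (cases "\<exists>u\<le>k. x u \<omega>")
  case True
  have "Max {u. u \<le> k \<and> x u \<omega>} \<le> k" using True by (intro Max.boundedI) auto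
  then have "r (Max {u. u \<le> k \<and> x u \<omega>}) \<le> r k" by (rule r_mono)
  moreover have "lat k \<omega> = r (Max {u. u \<le> k \<and> x u \<omega>}) - real n" using True by (simp add: lat_def)
  ultimately show ?thesis by simp
next
  case False
  then have "lat k \<omega> = 0" unfolding lat_def by (rule if_not_P)
  then show ?thesis by simp
qed

lemma aoi_nonneg: assumes "0 \<le> t" shows "0 \<le> mp_aoi \<delta> n N X \<omega> t"
proof (cases "t < r 0")
  case True then show ?thesis using assms latest_before by (simp add: mp_aoi_def)
next
  case False
  then obtain k where k: "r k \<le> t" "t < r (Suc k)" using locate[of t] by (metis not_less)
  then show ?thesis using lat_le[of k \<omega>] assms npos
    by (auto simp: mp_aoi_def latest_piece)
qed

lemma ftc_lin:
  fixes a b c :: real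
  assumes "a \<le> b"
  shows "((\<lambda>t. t - c) has_integral ((b\<^sup>2 - a\<^sup>2) / 2 - c * (b - a))) {a..b}"
proof -
  have "((\<lambda>t. t - c) has_integral ((\<lambda>t. t\<^sup>2 / 2 - c * t) b - (\<lambda>t. t\<^sup>2 / 2 - c * t) a)) {a..b}"
  proof (rule fundamental_theorem_of_calculus[OF assms, of "\<lambda>t. t\<^sup>2 / 2 - c * t" "\<lambda>t. t - c"])
    fix t assume "t \<in> {a..b}"
    have "((\<lambda>t. t\<^sup>2 / 2 - c * t) has_real_derivative (t - c)) (at t within {a..b})"
      by (auto intro!: derivative_eq_intros simp: power2_eq_square)
    then show "((\<lambda>t. t\<^sup>2 / 2 - c * t) has_vector_derivative (t - c)) (at t within {a..b})"
      by (simp add: has_real_derivative_iff_has_vector_derivative)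
  qed
  then show ?thesis by (rule has_integral_eq_rhs) (simp add: field_simps)
qed

lemma piece_int: "(mp_aoi \<delta> n N X \<omega> has_integral piece k \<omega>) {r k..r (Suc k)}"
proof -
  have le: "r k \<le> r (Suc k)" by (rule r_mono) simp
  have "((\<lambda>t. t - lat k \<omega>) has_integral (((r (Suc k))\<^sup>2 - (r k)\<^sup>2) / 2 - lat k \<omega> * (r (Suc k) - r k))) {r k..r (Suc k)}"
    by (rule ftc_lin[OF le])
  also have "((r (Suc k))\<^sup>2 - (r k)\<^sup>2) / 2 - lat k \<omega> * (r (Suc k) - r k) = piece k \<omega>"
    by (simp add: piece_def r_Suc power2_eq_square algebra_simps)
  finally have h: "((\<lambda>t. t - lat k \<omega>) has_integral piece k \<omega>) {r k..r (Suc k)}" .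
  show ?thesis
  proof (rule has_integral_spike_finite[OF _ _ h])
    show "finite {r (Suc k)}" by simp
    fix t assume "t \<in> {r k..r (Suc k)} - {r (Suc k)}"
    then have "r k \<le> t" "t < r (Suc k)" by auto
    then show "mp_aoi \<delta> n N X \<omega> t = t - lat k \<omega>" by (simp add: mp_aoi_def latest_piece)
  qed
qed

lemma init_int: "(mp_aoi \<delta> n N X \<omega> has_integral (real n)\<^sup>2 / 2) {0..r 0}"
proof -
  have "((\<lambda>t. t - 0) has_integral (((r 0)\<^sup>2 - 0\<^sup>2) / 2 - 0 * (r 0 - 0))) {0..r 0}"
    by (rule ftc_lin) (simp add: r_0)
  then have h: "((\<lambda>t. t - 0) has_integral (real n)\<^sup>2 / 2) {0..r 0}" by (simp add: r_0)
  show ?thesis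
  proof (rule has_integral_spike_finite[OF _ _ h])
    show "finite {r 0}" by simp
    fix t assume "t \<in> {0..r 0} - {r 0}"
    then have "t < r 0" by auto
    then show "mp_aoi \<delta> n N X \<omega> t = t - 0" by (simp add: mp_aoi_def latest_before)
  qed
qed

lemma total_int: "(mp_aoi \<delta> n N X \<omega> has_integral ((real n)\<^sup>2 / 2 + (\<Sum>k<K. piece k \<omega>))) {0..r K}"
proof (induction K)
  case 0 then show ?case using init_int by simp
next
  case (Suc K)
  have "(mp_aoi \<delta> n N X \<omega> has_integral (((real n)\<^sup>2 / 2 + (\<Sum>k<K. piece k \<omega>)) + piece K \<omega>)) {0..r (Suc K)}"
    by (rule has_integral_combine[OF _ _ Suc.IH piece_int])
       (use r_ge[of K] npos r_mono[of K "Suc K"] in auto)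
  then show ?case by (simp add: algebra_simps)
qed

lemma window_iff:
  assumes L: "L = Max {u. u \<le> k \<and> x u \<omega>}" and ex: "\<exists>u\<le>k. x u \<omega>" and j: "1 \<le> j" "j \<le> k"
  shows "(\<forall>u\<in>{Suc k - j..k}. \<not> x u \<omega>) \<longleftrightarrow> j \<le> k - L"
proof -
  have fin: "finite {u. u \<le> k \<and> x u \<omega>}" by simp
  have ne: "{u. u \<le> k \<and> x u \<omega>} \<noteq> {}" using ex by auto
  have Lin: "L \<le> k" "x L \<omega>" using Max_in[OF fin ne] L by auto
  have Lmax: "u \<le> L" if "u \<le> k" "x u \<omega>" for u using Max_ge[OF fin, of u] that L by auto
  show ?thesis
  proof
    assume h: "\<forall>u\<in>{Suc k - j..k}. \<not> x u \<omega>"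
    show "j \<le> k - L"
    proof (rule ccontr)
      assume "\<not> j \<le> k - L"
      then have "L \<in> {Suc k - j..k}" using Lin j by auto
      then show False using h Lin by auto
    qed
  next
    assume "j \<le> k - L"
    then show "\<forall>u\<in>{Suc k - j..k}. \<not> x u \<omega>" using Lmax Lin j by fastforce
  qed
qed

lemma piece_cc:
  assumes s: "x s \<omega>" "s \<le> k"
  shows "piece k \<omega> = cc k \<omega>"
proof -
  define L where "L = Max {u. u \<le> k \<and> x u \<omega>}"
  have ex: "\<exists>u\<le>k. x u \<omega>" using s by auto
  have fin: "finite {u. u \<le> k \<and> x u \<omega>}" by simp
  have ne: "{u. u \<le> k \<and> x u \<omega>} \<noteq> {}" using ex by auto
  have Lk: "L \<le> k" using Max_in[OF fin ne] by (auto simp: L_def)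
  have lat: "lat k \<omega> = r L - real n" using ex by (simp add: lat_def L_def)
  have "Rk k \<omega> = (\<Sum>j\<in>{1..k}. \<tau> (k - j) * of_bool (j \<le> k - L))"
    unfolding Rk_def
    by (rule sum.cong[OF refl]) (subst window_iff[OF L_def ex], auto)
  also have "\<dots> = (\<Sum>j\<in>{1..k - L}. \<tau> (k - j))"
    by (rule sum.mono_neutral_cong_right) (use Lk in auto)
  also have "\<dots> = (\<Sum>l\<in>{L..<k}. \<tau> l)"
    by (rule sum.reindex_bij_witness[where i="\<lambda>l. k - l" and j="\<lambda>j. k - j"]) (use Lk in auto)
  also have "\<dots> = r k - r L" using r_diff[OF Lk] by simp
  finally have "Rk k \<omega> = r k - r L" .
  then show ?thesis unfolding piece_def cc_def lat
    by (simp add: power2_eq_square algebra_simps flip: distrib_left)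
qed

end


lemma squeeze_ratio:
  fixes F :: "real \<Rightarrow> real" and s :: "nat \<Rightarrow> real"
  assumes mono: "\<And>a b. 0 \<le> a \<Longrightarrow> a \<le> b \<Longrightarrow> F a \<le> F b"
    and Fnn: "\<And>a. 0 \<le> a \<Longrightarrow> 0 \<le> F a"
    and spos: "\<And>p. 0 < s p" and smono: "\<And>p q. p \<le> q \<Longrightarrow> s p \<le> s q"
    and sunb: "\<And>T. \<exists>p. T < s p"
    and ratio: "(\<lambda>p. s (Suc p) / s p) \<longlonglongrightarrow> 1"
    and lim: "(\<lambda>p. F (s p) / s p) \<longlonglongrightarrow> L"
  shows "((\<lambda>T. F T / T) \<longlongrightarrow> L) at_top"
proof -
  define h where "h T = (LEAST p. T < s (Suc p))" for T
  have hex: "\<exists>p. T < s (Suc p)" for T using sunb[of T] smono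
    by (metis le_SucI order_less_le_trans order_refl)
  have h1: "T < s (Suc (h T))" for T unfolding h_def by (rule LeastI_ex[OF hex])
  have h2: "s (h T) \<le> T" if "s 0 \<le> T" for T
  proof (cases "h T")
    case 0 then show ?thesis using that by simp
  next
    case (Suc q)
    have "\<not> T < s (Suc q)" using not_less_Least[of q "\<lambda>p. T < s (Suc p)"] Suc by (simp add: h_def)
    then show ?thesis using Suc by simp
  qed
  have hlim: "filterlim h sequentially at_top"
  proof (subst filterlim_at_top, intro allI)
    fix Z :: nat
    show "\<forall>\<^sub>F T in at_top. Z \<le> h T"
      using eventually_ge_at_top[of "s Z"]
    proof eventually_elim
      case (elim T)
      show ?case
      proof (rule ccontr)
        assume "\<not> Z \<le> h T"
        then have "Suc (h T) \<le> Z" by simp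
        then have "s (Suc (h T)) \<le> s Z" by (rule smono)
        then show False using h1[of T] elim by simp
      qed
    qed
  qed
  have inv: "(\<lambda>p. s p / s (Suc p)) \<longlonglongrightarrow> 1"
    using tendsto_inverse[OF ratio] by (simp add: inverse_divide)
  have lim1: "(\<lambda>p. F (s p) / s p * (s p / s (Suc p))) \<longlonglongrightarrow> L * 1"
    by (rule tendsto_mult[OF lim inv])
  have eq1: "(\<lambda>p. F (s p) / s p * (s p / s (Suc p))) = (\<lambda>p. F (s p) / s (Suc p))"
  proof (rule ext)
    fix p show "F (s p) / s p * (s p / s (Suc p)) = F (s p) / s (Suc p)" using spos[of p] by simp
  qed
  have lim1': "(\<lambda>p. F (s p) / s (Suc p)) \<longlonglongrightarrow> L"
    using lim1 unfolding eq1 by simp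
  have lim2: "(\<lambda>p. F (s (Suc p)) / s (Suc p) * (s (Suc p) / s p)) \<longlonglongrightarrow> L * 1"
    by (intro tendsto_mult ratio) (rule LIMSEQ_Suc[OF lim])
  have eq2: "(\<lambda>p. F (s (Suc p)) / s (Suc p) * (s (Suc p) / s p)) = (\<lambda>p. F (s (Suc p)) / s p)"
  proof (rule ext)
    fix p show "F (s (Suc p)) / s (Suc p) * (s (Suc p) / s p) = F (s (Suc p)) / s p"
      using spos[of "Suc p"] by simp
  qed
  have lim2': "(\<lambda>p. F (s (Suc p)) / s p) \<longlonglongrightarrow> L"
    using lim2 unfolding eq2 by simp
  have A: "((\<lambda>T. F (s (h T)) / s (Suc (h T))) \<longlongrightarrow> L) at_top"
    using filterlim_compose[OF lim1' hlim] by (simp add: o_def)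
  have B: "((\<lambda>T. F (s (Suc (h T))) / s (h T)) \<longlongrightarrow> L) at_top"
    using filterlim_compose[OF lim2' hlim] by (simp add: o_def)
  show ?thesis
  proof (rule tendsto_sandwich[OF _ _ A B])
    show "\<forall>\<^sub>F T in at_top. F (s (h T)) / s (Suc (h T)) \<le> F T / T"
      using eventually_ge_at_top[of "s 0"]
    proof eventually_elim
      case (elim T)
      have T0: "0 < T" using spos[of 0] elim by simp
      have a: "F (s (h T)) \<le> F T" using mono[of "s (h T)" T] h2[OF elim] spos[of "h T"] by simp
      have b: "0 \<le> F (s (h T))" using Fnn spos[of "h T"] by (simp add: less_imp_le)
      have "F (s (h T)) / s (Suc (h T)) \<le> F (s (h T)) / T"
        using b T0 h1[of T] by (intro divide_left_mono) auto
      also have "\<dots> \<le> F T / T" using a T0 by (intro divide_right_mono) auto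
      finally show ?case .
    qed
    show "\<forall>\<^sub>F T in at_top. F T / T \<le> F (s (Suc (h T))) / s (h T)"
      using eventually_ge_at_top[of "s 0"]
    proof eventually_elim
      case (elim T)
      have T0: "0 < T" using spos[of 0] elim by simp
      have a: "F T \<le> F (s (Suc (h T)))" using mono[of T "s (Suc (h T))"] h1[of T] T0 by simp
      have b: "0 \<le> F (s (Suc (h T)))" using Fnn spos[of "Suc (h T)"] by (simp add: less_imp_le)
      have "F T / T \<le> F (s (Suc (h T))) / T" using a T0 by (intro divide_right_mono) auto
      also have "\<dots> \<le> F (s (Suc (h T))) / s (h T)"
        using b T0 h2[OF elim] spos[of "h T"] by (intro divide_left_mono) auto
      finally show ?case .
    qed
  qed
qed



lemma prod_ind:
  assumes "finite S"
  shows "(\<Prod>u\<in>S. if P u then 0 else (1::real)) = of_bool (\<forall>u\<in>S. \<not> P u)"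
  using assms by (induction S rule: finite_induct) auto

lemma mod_gap:
  fixes k k' j :: nat
  assumes "0 < j" "k mod j = k' mod j" "k < k'"
  shows "k + j \<le> k'"
proof -
  have "j dvd k' - k" using mod_eq_dvd_iff_nat[of k k' j] assms by simp
  moreover have "0 < k' - k" using assms by simp
  ultimately have "j \<le> k' - k" by (rule dvd_imp_le)
  then show ?thesis using assms by simp
qed

context mpl begin

definition V :: "nat \<Rightarrow> nat \<Rightarrow> 'a \<Rightarrow> real" where
  "V k j \<omega> = \<tau> k * \<tau> (k - j) * of_bool (\<forall>u\<in>{Suc k - j..k}. \<not> x u \<omega>)"

lemma V_meas[measurable]: "V k j \<in> borel_measurable M"
  unfolding V_def by measurable

lemma V_bounds: "0 \<le> V k j \<omega>" "V k j \<omega> \<le> (real n)\<^sup>2"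
proof -
  show "0 \<le> V k j \<omega>" by (simp add: V_def tau_nonneg)
  have "\<tau> k * \<tau> (k - j) \<le> real n * real n"
    using tau_nonneg tau_le by (intro mult_mono) auto
  then show "V k j \<omega> \<le> (real n)\<^sup>2"
    using tau_nonneg[of k] tau_nonneg[of "k-j"]
    by (auto simp: V_def power2_eq_square)
qed

lemma V_int: "integrable M (V k j)"
  by (rule integrable_const_bound[where B="(real n)\<^sup>2"]) (use V_bounds in auto)

lemma V_exp: "j \<le> k \<Longrightarrow> expectation (V k j) = \<tau> k * \<tau> (k - j) * \<epsilon> ^ j"
proof -
  assume jk: "j \<le> k"
  have "expectation (V k j) = \<tau> k * \<tau> (k - j) * expectation (indicator {\<omega> \<in> space M. \<forall>u\<in>{Suc k - j..k}. \<not> x u \<omega>})"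
    unfolding V_def
    by (subst integral_mult_right_zero[symmetric]) (rule Bochner_Integration.integral_cong, auto simp: indicator_def)
  also have "\<dots> = \<tau> k * \<tau> (k - j) * \<epsilon> ^ j"
    using jk by (simp add: prob_fails)
  finally show ?thesis .
qed

lemma V_indep:
  assumes j: "0 < j" and Cj: "\<And>k. k \<in> C \<Longrightarrow> j \<le> k"
    and mod: "\<And>k k'. k \<in> C \<Longrightarrow> k' \<in> C \<Longrightarrow> k mod j = k' mod j"
  shows "indep_vars (\<lambda>_. borel) (\<lambda>k. V k j) C"
proof -
  define W where "W k = {Suc k - j..k}" for k
  have dis: "disjoint_family_on W C"
    unfolding disjoint_family_on_def
  proof (intro ballI impI)
    fix k k' assume kk: "k \<in> C" "k' \<in> C" "k \<noteq> k'"
    show "W k \<inter> W k' = {}"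
    proof (cases "k < k'")
      case True
      then have "k + j \<le> k'" using mod_gap[OF j mod[OF kk(1,2)]] by simp
      then show ?thesis by (auto simp: W_def)
    next
      case False
      then have "k' < k" using kk by simp
      then have "k' + j \<le> k" using mod_gap[OF j mod[OF kk(2,1)]] by simp
      then show ?thesis by (auto simp: W_def)
    qed
  qed
  have "indep_vars (\<lambda>k. PiM (W k) (\<lambda>_. count_space UNIV)) (\<lambda>k \<omega>. restrict (\<lambda>u. x u \<omega>) (W k)) C"
    by (rule indep_vars_restrict[OF x_indep _ dis]) simp
  then have "indep_vars (\<lambda>_. borel)
      (\<lambda>k \<omega>. (\<lambda>g. \<tau> k * \<tau> (k - j) * (\<Prod>u\<in>W k. if g u then 0 else (1::real))) (restrict (\<lambda>u. x u \<omega>) (W k))) C"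
  proof (rule indep_vars_compose2)
    fix k assume "k \<in> C"
    have "(\<lambda>g. \<Prod>u\<in>W k. if g u then 0 else (1::real)) \<in> borel_measurable (PiM (W k) (\<lambda>_. count_space UNIV))"
    proof (rule borel_measurable_prod)
      fix u assume u: "u \<in> W k"
      have "(\<lambda>g. g u) \<in> measurable (PiM (W k) (\<lambda>_. count_space UNIV)) (count_space UNIV)"
        by (rule measurable_component_singleton[OF u])
      then have "(\<lambda>g. g u) -` {True} \<inter> space (PiM (W k) (\<lambda>_. count_space UNIV)) \<in> sets (PiM (W k) (\<lambda>_. count_space UNIV))"
        by (rule measurable_sets) simp
      moreover have "(\<lambda>g. g u) -` {True} \<inter> space (PiM (W k) (\<lambda>_. count_space UNIV)) = {g \<in> space (PiM (W k) (\<lambda>_. count_space UNIV)). g u}"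
        by auto
      ultimately have "Measurable.pred (PiM (W k) (\<lambda>_. count_space UNIV)) (\<lambda>g. g u)"
        by (simp add: pred_def)
      then show "(\<lambda>g. if g u then 0 else (1::real)) \<in> borel_measurable (PiM (W k) (\<lambda>_. count_space UNIV))"
        by measurable
    qed
    then show "(\<lambda>g. \<tau> k * \<tau> (k - j) * (\<Prod>u\<in>W k. if g u then 0 else (1::real))) \<in> borel_measurable (PiM (W k) (\<lambda>_. count_space UNIV))"
      by measurable
  qed
  then show ?thesis
  proof (rule indep_vars_cong[THEN iffD1, rotated -1])
    fix k assume "k \<in> C"
    show "(\<lambda>\<omega>. (\<lambda>g. \<tau> k * \<tau> (k - j) * (\<Prod>u\<in>W k. if g u then 0 else (1::real))) (restrict (\<lambda>u. x u \<omega>) (W k))) = V k j"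
      by (rule ext) (simp add: V_def W_def prod_ind)
  qed auto
qed

lemma hoeffding_block:
  assumes j: "0 < j" and Cj: "\<And>k. k \<in> C \<Longrightarrow> j \<le> k"
    and mod: "\<And>k k'. k \<in> C \<Longrightarrow> k' \<in> C \<Longrightarrow> k mod j = k' mod j"
    and fin: "finite C" and card: "card C \<le> K" and K: "0 < K" and t: "0 < t"
  shows "prob {\<omega> \<in> space M. t \<le> \<bar>(\<Sum>k\<in>C. V k j \<omega>) - (\<Sum>k\<in>C. \<tau> k * \<tau> (k - j) * \<epsilon> ^ j)\<bar>}
         \<le> 2 * exp (- 2 * t\<^sup>2 / (real K * (real n)^4))"
proof (cases "C = {}")
  case True
  then have e: "{\<omega> \<in> space M. t \<le> \<bar>(\<Sum>k\<in>C. V k j \<omega>) - (\<Sum>k\<in>C. \<tau> k * \<tau> (k - j) * \<epsilon> ^ j)\<bar>} = {}"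
    using t by auto
  show ?thesis unfolding e by simp
next
  case False
  have H: "Hoeffding_ineq M C (\<lambda>k. V k j) (\<lambda>_. 0) (\<lambda>_. (real n)\<^sup>2)"
    unfolding Hoeffding_ineq_def indep_interval_bounded_random_variables_def
      indep_interval_bounded_random_variables_axioms_def
    using V_indep[OF j Cj mod] fin V_bounds by (auto intro: prob_space_axioms)
  have "0 < card C" using False fin by (simp add: card_gt_0_iff)
  then have pos: "0 < (\<Sum>k\<in>C. ((real n)\<^sup>2 - 0)\<^sup>2)" using npos by simp
  have h0: "prob {\<omega> \<in> space M. t \<le> \<bar>(\<Sum>k\<in>C. V k j \<omega>) - (\<Sum>k\<in>C. expectation (V k j))\<bar>}
        \<le> 2 * exp (- 2 * t\<^sup>2 / (\<Sum>k\<in>C. ((real n)\<^sup>2 - 0)\<^sup>2))"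
    using Hoeffding_ineq.Hoeffding_ineq_abs_ge[OF H _ pos, of t] t by simp
  have es: "(\<Sum>k\<in>C. expectation (V k j)) = (\<Sum>k\<in>C. \<tau> k * \<tau> (k - j) * \<epsilon> ^ j)"
    by (rule sum.cong) (auto simp: V_exp Cj)
  have cs: "(\<Sum>k\<in>C. ((real n)\<^sup>2 - 0)\<^sup>2) = real (card C) * (real n)^4" by simp
  have h1: "prob {\<omega> \<in> space M. t \<le> \<bar>(\<Sum>k\<in>C. V k j \<omega>) - (\<Sum>k\<in>C. \<tau> k * \<tau> (k - j) * \<epsilon> ^ j)\<bar>}
        \<le> 2 * exp (- 2 * t\<^sup>2 / (real (card C) * (real n)^4))"
    using h0 unfolding es cs .
  have le: "real (card C) * (real n)^4 \<le> real K * (real n)^4" using card by (intro mult_right_mono) auto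
  have "2 * t\<^sup>2 / (real K * (real n)^4) \<le> 2 * t\<^sup>2 / (real (card C) * (real n)^4)"
    using le pos t unfolding cs by (intro divide_left_mono) auto
  then have "exp (- 2 * t\<^sup>2 / (real (card C) * (real n)^4)) \<le> exp (- 2 * t\<^sup>2 / (real K * (real n)^4))"
    by simp
  then show ?thesis using h1 by linarith
qed

end


lemma summable_poly_geom:
  fixes q :: real
  assumes q: "0 \<le> q" "q < 1"
  shows "summable (\<lambda>p. real p ^ k * q ^ p)"
proof -
  define s where "s = root (Suc k) q"
  have s0: "0 \<le> s" using q by (simp add: s_def)
  have s1: "s < 1" using q by (simp add: s_def)
  have sq: "s ^ Suc k = q" unfolding s_def by (rule real_root_pow_pos2) (use q in auto)
  have lim0: "(\<lambda>p. of_nat p * s ^ p) \<longlonglongrightarrow> (0::real)"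
    by (rule powser_times_n_limit_0) (use s0 s1 in simp)
  have "eventually (\<lambda>p. real p * s ^ p < 1) sequentially"
    using order_tendstoD(2)[OF lim0, of 1] by simp
  then have ev: "eventually (\<lambda>p. real p * s ^ p \<le> 1) sequentially"
    by (rule eventually_mono) simp
  show ?thesis
  proof (rule summable_comparison_test_ev[OF _ summable_geometric[of s]])
    show "eventually (\<lambda>p. norm (real p ^ k * q ^ p) \<le> s ^ p) sequentially"
      using ev
    proof eventually_elim
      case (elim p)
      have "real p ^ k * q ^ p = (real p * s ^ p) ^ k * s ^ p"
        by (simp add: sq[symmetric] power_mult_distrib power_mult[symmetric] mult.commute power_add)
      also have "\<dots> \<le> 1 ^ k * s ^ p"
        using elim s0 by (intro mult_right_mono power_mono) auto
      finally show ?case using s0 q by simp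
    qed
    show "norm s < 1" using s0 s1 by simp
  qed
qed

lemma summable_poly_geom_Suc:
  fixes q :: real
  assumes q: "0 \<le> q" "q < 1"
  shows "summable (\<lambda>p. real (Suc p) ^ k * q ^ Suc p)"
  using summable_poly_geom[OF q, of k] summable_Suc_iff[of "\<lambda>p. real p ^ k * q ^ p"] by simp

lemma periodic_sum:
  fixes g :: "nat \<Rightarrow> real"
  assumes per: "\<And>k. g (k + N) = g k"
  shows "(\<Sum>k<m * N. g k) = real m * (\<Sum>k<N. g k)"
proof (induction m)
  case 0 then show ?case by simp
next
  case (Suc m)
  have per2: "g (k + m * N) = g k" for k
  proof (induction m)
    case 0 show ?case by simp
  next
    case (Suc m)
    have "k + Suc m * N = (k + m * N) + N" by simp
    then show ?case using per Suc by metis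
  qed
  have e: "{..<Suc m * N} = {..<m * N} \<union> {m * N..<m * N + N}" by auto
  have d: "{..<m * N} \<inter> {m * N..<m * N + N} = {}" by auto
  have "(\<Sum>k<Suc m * N. g k) = (\<Sum>k<m * N. g k) + (\<Sum>k\<in>{m * N..<m * N + N}. g k)"
    unfolding e by (rule sum.union_disjoint[OF finite_lessThan finite_atLeastLessThan d])
  also have "(\<Sum>k\<in>{m * N..<m * N + N}. g k) = (\<Sum>k\<in>{0..<N}. g (k + m * N))"
    using sum.shift_bounds_nat_ivl[of g 0 "m * N" N] by (simp add: add.commute)
  also have "\<dots> = (\<Sum>k<N. g k)" by (simp add: per2 lessThan_atLeast0)
  finally show ?case using Suc by (simp add: algebra_simps)
qed

context mpl begin

lemma tau_per: "\<tau> (k + N) = \<tau> k" by (simp add: \<tau>_def)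

definition Pp :: "nat \<Rightarrow> real" where "Pp j = (\<Sum>\<rho><N. \<tau> \<rho> * \<tau> (\<rho> + j))"

lemma Pp_bound: "\<bar>Pp j\<bar> \<le> real N * (real n)\<^sup>2"
proof -
  have "\<bar>Pp j\<bar> \<le> (\<Sum>\<rho><N. \<bar>\<tau> \<rho> * \<tau> (\<rho> + j)\<bar>)" unfolding Pp_def by (rule sum_abs)
  also have "\<dots> \<le> (\<Sum>\<rho><N. (real n)\<^sup>2)"
    by (rule sum_mono) (use tau_nonneg tau_le in \<open>auto simp: power2_eq_square intro!: mult_mono\<close>)
  finally show ?thesis by simp
qed

lemma lag_sum:
  "\<bar>(\<Sum>k\<in>{j..<m * N}. \<tau> k * \<tau> (k - j)) - real m * Pp j\<bar> \<le> real j * (real n)\<^sup>2"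
proof -
  define g where "g k = \<tau> k * \<tau> (k + j)" for k
  have gper: "g (k + N) = g k" for k unfolding g_def
    by (metis tau_per add.commute add.left_commute)
  have g0: "0 \<le> g k" "g k \<le> (real n)\<^sup>2" for k
    unfolding g_def using tau_nonneg tau_le by (auto simp: power2_eq_square intro!: mult_mono)
  have full: "(\<Sum>k<m * N. g k) = real m * Pp j"
    using periodic_sum[of g N m, OF gper] by (simp add: Pp_def g_def)
  have sh: "(\<Sum>k\<in>{j..<m * N}. \<tau> k * \<tau> (k - j)) = (\<Sum>k<m * N - j. g k)"
  proof (cases "j \<le> m * N")
    case True
    have "(\<Sum>k\<in>{j..<m * N}. \<tau> k * \<tau> (k - j)) = (\<Sum>k\<in>{0 + j..<(m * N - j) + j}. \<tau> k * \<tau> (k - j))"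
      using True by simp
    also have "\<dots> = (\<Sum>k\<in>{0..<m * N - j}. \<tau> (k + j) * \<tau> k)"
      by (subst sum.shift_bounds_nat_ivl) simp
    finally show ?thesis by (simp add: g_def lessThan_atLeast0 mult.commute add.commute)
  qed simp
  have split: "(\<Sum>k<m * N. g k) = (\<Sum>k<m * N - j. g k) + (\<Sum>k\<in>{m * N - j..<m * N}. g k)"
  proof -
    have e: "{..<m * N} = {..<m * N - j} \<union> {m * N - j..<m * N}" by auto
    have d: "{..<m * N - j} \<inter> {m * N - j..<m * N} = {}" by auto
    show ?thesis unfolding e by (rule sum.union_disjoint[OF finite_lessThan finite_atLeastLessThan d])
  qed
  have "0 \<le> (\<Sum>k\<in>{m * N - j..<m * N}. g k)" by (rule sum_nonneg) (simp add: g0)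
  moreover have "(\<Sum>k\<in>{m * N - j..<m * N}. g k) \<le> (\<Sum>k\<in>{m * N - j..<m * N}. (real n)\<^sup>2)"
    by (rule sum_mono) (simp add: g0)
  moreover have "(\<Sum>k\<in>{m * N - j..<m * N}. (real n)\<^sup>2) \<le> real j * (real n)\<^sup>2"
  proof -
    have c: "card {m * N - j..<m * N} \<le> j" by simp
    have c': "real (card {m * N - j..<m * N}) \<le> real j" using c by (simp only: of_nat_le_iff)
    have "(\<Sum>k\<in>{m * N - j..<m * N}. (real n)\<^sup>2) = real (card {m * N - j..<m * N}) * (real n)\<^sup>2"
      by (simp only: sum_constant of_nat_id)
    also have "\<dots> \<le> real j * (real n)\<^sup>2" by (rule mult_right_mono[OF c']) simp
    finally show ?thesis .
  qed
  ultimately show ?thesis using full sh split by (auto simp: abs_le_iff)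
qed

definition Rsum :: "nat \<Rightarrow> 'a \<Rightarrow> real" where
  "Rsum K \<omega> = (\<Sum>k<K. \<tau> k * Rk k \<omega>)"

lemma Rsum_swap: "Rsum K \<omega> = (\<Sum>j\<in>{1..K}. \<Sum>k\<in>{j..<K}. V k j \<omega>)"
proof -
  have "Rsum K \<omega> = (\<Sum>k<K. \<Sum>j\<in>{j. j \<in> {1..K} \<and> j \<le> k}. V k j \<omega>)"
    unfolding Rsum_def Rk_def
  proof (rule sum.cong[OF refl])
    fix k assume k: "k \<in> {..<K}"
    have e: "{j. j \<in> {1..K} \<and> j \<le> k} = {1..k}" using k by auto
    show "\<tau> k * (\<Sum>j = 1..k. \<tau> (k - j) * of_bool (\<forall>u\<in>{Suc k - j..k}. \<not> x u \<omega>))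
        = (\<Sum>j\<in>{j. j \<in> {1..K} \<and> j \<le> k}. V k j \<omega>)"
      unfolding e V_def sum_distrib_left by (simp only: mult.assoc)
  qed
  also have "\<dots> = (\<Sum>j\<in>{1..K}. \<Sum>k\<in>{k. k \<in> {..<K} \<and> j \<le> k}. V k j \<omega>)"
    by (rule sum.swap_restrict) auto
  also have "\<dots> = (\<Sum>j\<in>{1..K}. \<Sum>k\<in>{j..<K}. V k j \<omega>)"
    by (rule sum.cong[OF refl]) (rule sum.cong, auto)
  finally show ?thesis .
qed

lemma cc_sum: "(\<Sum>k<K. cc k \<omega>) = (\<Sum>k<K. \<tau> k * (real n + \<tau> k / 2)) + Rsum K \<omega>"
  by (simp add: cc_def Rsum_def sum.distrib)

lemma det_sum: "(\<Sum>k<m * N. \<tau> k * (real n + \<tau> k / 2)) = real m * ((real n)\<^sup>2 + (\<Sum>\<rho><N. (\<tau> \<rho>)\<^sup>2) / 2)"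
proof -
  have "(\<Sum>k<m * N. \<tau> k * (real n + \<tau> k / 2)) = real m * (\<Sum>\<rho><N. \<tau> \<rho> * (real n + \<tau> \<rho> / 2))"
    by (rule periodic_sum) (simp add: tau_per)
  also have "(\<Sum>\<rho><N. \<tau> \<rho> * (real n + \<tau> \<rho> / 2)) = real n * (\<Sum>\<rho><N. \<tau> \<rho>) + (\<Sum>\<rho><N. (\<tau> \<rho>)\<^sup>2) / 2"
    by (simp add: algebra_simps sum.distrib sum_distrib_left sum_divide_distrib power2_eq_square)
  also have "(\<Sum>\<rho><N. \<tau> \<rho>) = real n"
    using T_sum by (simp add: \<tau>_def)
  finally show ?thesis by (simp add: power2_eq_square)
qed

end


context mpl begin

definition mm :: "nat \<Rightarrow> nat" where "mm p = Suc p ^ 8"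
definition KK :: "nat \<Rightarrow> nat" where "KK p = mm p * N"
definition tt :: "nat \<Rightarrow> real" where "tt p = real (Suc p ^ 5)"

definition Cs :: "nat \<Rightarrow> nat \<Rightarrow> nat \<Rightarrow> nat set" where
  "Cs p j \<rho> = {k. k \<in> {j..<KK p} \<and> k mod j = \<rho>}"

definition Dev :: "nat \<Rightarrow> nat \<Rightarrow> nat \<Rightarrow> 'a \<Rightarrow> real" where
  "Dev p j \<rho> \<omega> = (\<Sum>k\<in>Cs p j \<rho>. V k j \<omega>) - (\<Sum>k\<in>Cs p j \<rho>. \<tau> k * \<tau> (k - j) * \<epsilon> ^ j)"

definition B1 :: "nat \<Rightarrow> 'a set" where
  "B1 p = (\<Union>k\<in>{Suc (Suc p)..<KK p}. {\<omega> \<in> space M. \<forall>u\<in>{Suc k - Suc (Suc p)..k}. \<not> x u \<omega>})"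

definition B2 :: "nat \<Rightarrow> 'a set" where
  "B2 p = (\<Union>j\<in>{1..Suc p}. \<Union>\<rho>\<in>{..<j}. {\<omega> \<in> space M. tt p \<le> \<bar>Dev p j \<rho> \<omega>\<bar>})"

definition Bad :: "nat \<Rightarrow> 'a set" where "Bad p = B1 p \<union> B2 p"

lemma Dev_meas[measurable]: "Dev p j \<rho> \<in> borel_measurable M"
  unfolding Dev_def by measurable

lemma B1_sets[measurable]: "B1 p \<in> sets M" unfolding B1_def by measurable
lemma B2_sets[measurable]: "B2 p \<in> sets M" unfolding B2_def by measurable
lemma Bad_sets[measurable]: "Bad p \<in> sets M" unfolding Bad_def by measurable

lemma KK_pos: "0 < KK p" using Npos by (simp add: KK_def mm_def)

lemma prob_B1: "prob (B1 p) \<le> real (KK p) * \<epsilon> ^ Suc (Suc p)"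
proof -
  have "prob (B1 p) \<le> (\<Sum>k\<in>{Suc (Suc p)..<KK p}. prob {\<omega> \<in> space M. \<forall>u\<in>{Suc k - Suc (Suc p)..k}. \<not> x u \<omega>})"
    unfolding B1_def by (rule measure_UNION_le) auto
  also have "\<dots> = (\<Sum>k\<in>{Suc (Suc p)..<KK p}. \<epsilon> ^ Suc (Suc p))"
  proof (rule sum.cong[OF refl])
    fix k assume "k \<in> {Suc (Suc p)..<KK p}"
    then have "card {Suc k - Suc (Suc p)..k} = Suc (Suc p)" by auto
    then show "prob {\<omega> \<in> space M. \<forall>u\<in>{Suc k - Suc (Suc p)..k}. \<not> x u \<omega>} = \<epsilon> ^ Suc (Suc p)"
      by (simp add: prob_fails)
  qed
  also have "\<dots> \<le> real (KK p) * \<epsilon> ^ Suc (Suc p)"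
    using e0 by (simp add: mult_right_mono)
  finally show ?thesis .
qed

lemma exp_bound: "exp (- 2 * (tt p)\<^sup>2 / (real (KK p) * (real n)^4)) \<le> exp (- 2 / (real N * (real n)^4)) ^ Suc p"
proof -
  define P where "P = real (Suc p)"
  have P0: "0 < P" by (simp add: P_def)
  have tP: "tt p = P ^ 5" by (simp add: tt_def P_def)
  have kP: "real (KK p) = P ^ 8 * real N" by (simp add: KK_def mm_def P_def)
  have hP: "(P ^ 5)\<^sup>2 = P ^ 8 * (P * P)"
    by (simp add: power2_eq_square[symmetric] power_add[symmetric] power_mult[symmetric])
  have e0: "2 * (tt p)\<^sup>2 / (real (KK p) * (real n)^4) = P * (P * (2 / (real N * (real n)^4)))"
    unfolding tP kP hP using npos Npos P0 by (simp add: field_simps)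
  have e: "2 * (tt p)\<^sup>2 / (real (KK p) * (real n)^4) = real (Suc p) * (real (Suc p) * (2 / (real N * (real n)^4)))"
    using e0 by (simp add: P_def)
  have c0: "0 \<le> 2 / (real N * (real n)^4)" by simp
  have "2 / (real N * (real n)^4) \<le> real (Suc p) * (2 / (real N * (real n)^4))"
    using mult_right_mono[of 1 "real (Suc p)" "2 / (real N * (real n)^4)"] c0 by simp
  then have "real (Suc p) * (2 / (real N * (real n)^4)) \<le> real (Suc p) * (real (Suc p) * (2 / (real N * (real n)^4)))"
    by (intro mult_left_mono) auto
  then have "- 2 * (tt p)\<^sup>2 / (real (KK p) * (real n)^4) \<le> real (Suc p) * (- 2 / (real N * (real n)^4))"
    using e by simp
  then have "exp (- 2 * (tt p)\<^sup>2 / (real (KK p) * (real n)^4)) \<le> exp (real (Suc p) * (- 2 / (real N * (real n)^4)))"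
    by simp
  also have "\<dots> = exp (- 2 / (real N * (real n)^4)) ^ Suc p" by (rule exp_of_nat_mult)
  finally show ?thesis .
qed

lemma prob_B2: "prob (B2 p) \<le> real (Suc p) ^ 2 * (2 * exp (- 2 / (real N * (real n)^4)) ^ Suc p)"
proof -
  let ?b = "2 * exp (- 2 / (real N * (real n)^4)) ^ Suc p"
  have one: "prob {\<omega> \<in> space M. tt p \<le> \<bar>Dev p j \<rho> \<omega>\<bar>} \<le> ?b" if j: "j \<in> {1..Suc p}" for j \<rho>
  proof -
    have "prob {\<omega> \<in> space M. tt p \<le> \<bar>Dev p j \<rho> \<omega>\<bar>} \<le> 2 * exp (- 2 * (tt p)\<^sup>2 / (real (KK p) * (real n)^4))"
      unfolding Dev_def
    proof (rule hoeffding_block)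
      show "0 < j" using j by simp
      show "card (Cs p j \<rho>) \<le> KK p"
      proof -
        have "Cs p j \<rho> \<subseteq> {..<KK p}" by (auto simp: Cs_def)
        then show ?thesis using card_mono[of "{..<KK p}"] by fastforce
      qed
      show "0 < tt p" by (simp add: tt_def)
    qed (auto simp: Cs_def KK_pos)
    also have "\<dots> \<le> ?b" using exp_bound[of p] by simp
    finally show ?thesis .
  qed
  have "prob (B2 p) \<le> (\<Sum>j\<in>{1..Suc p}. prob (\<Union>\<rho>\<in>{..<j}. {\<omega> \<in> space M. tt p \<le> \<bar>Dev p j \<rho> \<omega>\<bar>}))"
    unfolding B2_def by (rule measure_UNION_le) auto
  also have "\<dots> \<le> (\<Sum>j\<in>{1..Suc p}. \<Sum>\<rho><j. prob {\<omega> \<in> space M. tt p \<le> \<bar>Dev p j \<rho> \<omega>\<bar>})"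
    by (rule sum_mono, rule measure_UNION_le) auto
  also have "\<dots> \<le> (\<Sum>j\<in>{1..Suc p}. \<Sum>\<rho><j. ?b)"
    by (intro sum_mono one) auto
  also have "\<dots> = (\<Sum>j\<in>{1..Suc p}. real j * ?b)" by (rule sum.cong) auto
  also have "\<dots> = (\<Sum>j\<in>{1..Suc p}. real j) * ?b" by (rule sum_distrib_right[symmetric])
  also have "(\<Sum>j\<in>{1..Suc p}. real j) \<le> (\<Sum>j\<in>{1..Suc p}. real (Suc p))"
    by (rule sum_mono) auto
  also have "\<dots> = real (Suc p) ^ 2" by (simp add: power2_eq_square)
  finally show ?thesis by (simp add: mult_right_mono)
qed

lemma AE_good: "AE \<omega> in M. eventually (\<lambda>p. \<omega> \<in> space M - Bad p) sequentially"
proof (rule borel_cantelli_AE1)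
  show "\<And>p. Bad p \<in> sets M" by simp
  show "\<And>p. emeasure M (Bad p) < \<infinity>" by (simp add: less_top[symmetric])
  define q where "q = exp (- 2 / (real N * (real n)^4))"
  have q: "0 \<le> q" "q < 1" using npos Npos by (auto simp: q_def)
  have sb: "summable (\<lambda>p. real N * \<epsilon> * (real (Suc p) ^ 8 * \<epsilon> ^ Suc p) + 2 * (real (Suc p) ^ 2 * q ^ Suc p))"
    using summable_poly_geom_Suc[of \<epsilon> 8] summable_poly_geom_Suc[OF q, of 2] e0 e1
    by (intro summable_add summable_mult) auto
  show "summable (\<lambda>p. measure M (Bad p))"
  proof (rule summable_comparison_test[OF _ sb], intro exI allI impI)
    fix p :: nat
    have "measure M (Bad p) \<le> prob (B1 p) + prob (B2 p)"
      unfolding Bad_def by (rule measure_Un_le) auto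
    also have "\<dots> \<le> real (KK p) * \<epsilon> ^ Suc (Suc p) + real (Suc p) ^ 2 * (2 * q ^ Suc p)"
      using prob_B1[of p] prob_B2[of p] by (simp add: q_def)
    also have "\<dots> = real N * \<epsilon> * (real (Suc p) ^ 8 * \<epsilon> ^ Suc p) + 2 * (real (Suc p) ^ 2 * q ^ Suc p)"
      by (simp add: KK_def mm_def)
    finally show "norm (measure M (Bad p)) \<le> real N * \<epsilon> * (real (Suc p) ^ 8 * \<epsilon> ^ Suc p) + 2 * (real (Suc p) ^ 2 * q ^ Suc p)"
      by simp
  qed
qed

end


lemma abs_div_shift: "0 < (m::real) \<Longrightarrow> \<bar>a / m - s\<bar> = \<bar>a - m * s\<bar> / m"
proof -
  assume m: "0 < m"
  have "a / m - s = (a - m * s) / m" using m by (simp add: diff_divide_distrib)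
  then have "\<bar>a / m - s\<bar> = \<bar>a - m * s\<bar> / \<bar>m\<bar>" by (simp only: abs_divide)
  then show ?thesis using m by (simp only: abs_of_pos)
qed
lemma P8_bound: "1 \<le> (P::real) \<Longrightarrow> 0 \<le> c \<Longrightarrow> P * (P * c) / P ^ 8 \<le> c / P"
proof -
  assume P: "1 \<le> P" and c: "0 \<le> c"
  have e: "P ^ 8 = P ^ 2 * P ^ 6" by (simp flip: power_add)
  have P0: "P \<noteq> 0" using P by auto
  have "P * (P * c) / P ^ 8 = c / P ^ 6" using P0 unfolding e power2_eq_square by simp
  also have "\<dots> \<le> c / P"
  proof (rule divide_left_mono[OF _ c])
    show "P \<le> P ^ 6" using power_increasing[of 1 6 P] P by simp
    show "0 < P ^ 6 * P" using P by simp
  qed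
  finally show ?thesis .
qed
lemma P7: "0 < (P::real) \<Longrightarrow> P * (P * P ^ 5) = P ^ 8 / P"
proof -
  assume P: "0 < P"
  have e: "P ^ 8 = P ^ 2 * P ^ 6" by (simp flip: power_add)
  have e2: "P ^ 6 = P * P ^ 5" using power_add[of P 1 5] by simp
  show ?thesis using P unfolding e e2 power2_eq_square by simp
qed

lemma tendsto_close:
  fixes f g e :: "'b \<Rightarrow> real"
  assumes "(g \<longlongrightarrow> L) F" "(e \<longlongrightarrow> 0) F" "eventually (\<lambda>x. \<bar>f x - g x\<bar> \<le> e x) F"
  shows "(f \<longlongrightarrow> L) F"
proof -
  have "((\<lambda>x. f x - g x) \<longlongrightarrow> 0) F"
  proof (rule Lim_null_comparison[OF _ assms(2)])
    show "\<forall>\<^sub>F x in F. norm (f x - g x) \<le> e x"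
      by (rule eventually_mono[OF assms(3)]) simp
  qed
  from tendsto_add[OF this assms(1)] show ?thesis by simp
qed

context mpl begin

definition Dd :: "nat \<Rightarrow> real" where
  "Dd p = (\<Sum>j\<in>{1..Suc p}. \<Sum>k\<in>{j..<KK p}. \<tau> k * \<tau> (k - j) * \<epsilon> ^ j)"

definition Qc :: real where "Qc = (\<Sum>l. \<epsilon> ^ Suc l * Pp (Suc l))"

lemma good_bound:
  assumes \<omega>: "\<omega> \<in> space M - Bad p"
  shows "\<bar>Rsum (KK p) \<omega> - Dd p\<bar> \<le> real (mm p) / real (Suc p)"
proof -
  let ?K = "KK p" and ?W = "Suc p"
  define h where "h j = (\<Sum>k\<in>{j..<?K}. V k j \<omega>)" for j
  have nB1: "\<not> (\<forall>u\<in>{Suc k - Suc ?W..k}. \<not> x u \<omega>)" if "k \<in> {Suc ?W..<?K}" for k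
    using \<omega> that by (auto simp: Bad_def B1_def)
  have nB2: "\<bar>Dev p j \<rho> \<omega>\<bar> < tt p" if "j \<in> {1..?W}" "\<rho> < j" for j \<rho>
    using \<omega> that by (auto simp: Bad_def B2_def not_le)
  have hz: "h j = 0" if "?W < j" for j
    unfolding h_def
  proof (rule sum.neutral, intro ballI)
    fix k assume k: "k \<in> {j..<?K}"
    have kk: "k \<in> {Suc ?W..<?K}" using k that by auto
    obtain u where u: "u \<in> {Suc k - Suc ?W..k}" "x u \<omega>" using nB1[OF kk] by blast
    then have "u \<in> {Suc k - j..k}" using that k by auto
    then show "V k j \<omega> = 0" using u by (auto simp: V_def)
  qed
  have hz2: "h j = 0" if "?K < j" for j unfolding h_def using that by simp
  have "Rsum ?K \<omega> = (\<Sum>j\<in>{1..?K}. h j)" unfolding Rsum_swap h_def ..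
  also have "\<dots> = (\<Sum>j\<in>{1..?K} \<union> {1..?W}. h j)"
    by (rule sum.mono_neutral_left) (auto intro: hz2)
  also have "\<dots> = (\<Sum>j\<in>{1..?W}. h j)"
    by (rule sum.mono_neutral_right) (auto intro: hz)
  finally have R: "Rsum ?K \<omega> = (\<Sum>j\<in>{1..?W}. h j)" .
  have hd: "h j - (\<Sum>k\<in>{j..<?K}. \<tau> k * \<tau> (k - j) * \<epsilon> ^ j) = (\<Sum>\<rho><j. Dev p j \<rho> \<omega>)" if "1 \<le> j" for j
  proof -
    have g1: "(\<Sum>\<rho><j. \<Sum>k\<in>Cs p j \<rho>. f k) = (\<Sum>k\<in>{j..<?K}. f k)" for f :: "nat \<Rightarrow> real"
      unfolding Cs_def by (rule sum.group) (use that in auto)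
    show ?thesis unfolding Dev_def sum_subtractf g1 h_def ..
  qed
  have "Rsum ?K \<omega> - Dd p = (\<Sum>j\<in>{1..?W}. h j - (\<Sum>k\<in>{j..<?K}. \<tau> k * \<tau> (k - j) * \<epsilon> ^ j))"
    by (simp only: R Dd_def sum_subtractf)
  also have "\<dots> = (\<Sum>j\<in>{1..?W}. \<Sum>\<rho><j. Dev p j \<rho> \<omega>)"
    by (rule sum.cong[OF refl], rule hd) simp
  finally have "\<bar>Rsum ?K \<omega> - Dd p\<bar> = \<bar>\<Sum>j\<in>{1..?W}. \<Sum>\<rho><j. Dev p j \<rho> \<omega>\<bar>" by simp
  also have "\<dots> \<le> (\<Sum>j\<in>{1..?W}. \<bar>\<Sum>\<rho><j. Dev p j \<rho> \<omega>\<bar>)" by (rule sum_abs)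
  also have "\<dots> \<le> (\<Sum>j\<in>{1..?W}. \<Sum>\<rho><j. \<bar>Dev p j \<rho> \<omega>\<bar>)" by (rule sum_mono, rule sum_abs)
  also have "\<dots> \<le> (\<Sum>j\<in>{1..?W}. \<Sum>\<rho><j. tt p)"
    by (intro sum_mono less_imp_le nB2) auto
  also have "\<dots> \<le> (\<Sum>j\<in>{1..?W}. real ?W * tt p)"
    by (rule sum_mono) (auto simp: tt_def intro!: mult_right_mono)
  also have "\<dots> = real (Suc p) * (real (Suc p) * real (Suc p) ^ 5)" by (simp add: tt_def)
  also have "\<dots> = real (Suc p) ^ 8 / real (Suc p)" by (rule P7) simp
  also have "\<dots> = real (mm p) / real (Suc p)" by (simp add: mm_def)
  finally show ?thesis .
qed

lemma Dd_close: "\<bar>Dd p / real (mm p) - (\<Sum>j\<in>{1..Suc p}. \<epsilon> ^ j * Pp j)\<bar> \<le> (real n)\<^sup>2 / real (Suc p)"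
proof -
  have mpos: "0 < real (mm p)" by (simp add: mm_def)
  let ?L = "\<lambda>j. \<Sum>k\<in>{j..<mm p * N}. \<tau> k * \<tau> (k - j)"
  have d1: "Dd p = (\<Sum>j\<in>{1..Suc p}. ?L j * \<epsilon> ^ j)"
    by (simp only: Dd_def KK_def sum_distrib_right)
  have d2: "real (mm p) * (\<Sum>j\<in>{1..Suc p}. \<epsilon> ^ j * Pp j) = (\<Sum>j\<in>{1..Suc p}. (real (mm p) * Pp j) * \<epsilon> ^ j)"
    unfolding sum_distrib_left by (rule sum.cong[OF refl]) (simp only: mult_ac)
  have "\<bar>Dd p - real (mm p) * (\<Sum>j\<in>{1..Suc p}. \<epsilon> ^ j * Pp j)\<bar>
      = \<bar>\<Sum>j\<in>{1..Suc p}. (?L j - real (mm p) * Pp j) * \<epsilon> ^ j\<bar>"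
    by (simp only: d1 d2 sum_subtractf[symmetric] left_diff_distrib)
  also have "\<dots> \<le> (\<Sum>j\<in>{1..Suc p}. \<bar>(?L j - real (mm p) * Pp j) * \<epsilon> ^ j\<bar>)"
    by (rule sum_abs)
  also have "\<dots> \<le> (\<Sum>j\<in>{1..Suc p}. (real (Suc p) * (real n)\<^sup>2) * 1)"
  proof (rule sum_mono)
    fix j assume j: "j \<in> {1..Suc p}"
    have "\<bar>(?L j - real (mm p) * Pp j) * \<epsilon> ^ j\<bar> = \<bar>?L j - real (mm p) * Pp j\<bar> * \<epsilon> ^ j"
      using e0 by (simp add: abs_mult)
    also have "\<dots> \<le> (real (Suc p) * (real n)\<^sup>2) * 1"
    proof (rule mult_mono)
      show "\<epsilon> ^ j \<le> 1" using e0 e1 by (simp add: power_le_one)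
      have "real j * (real n)\<^sup>2 \<le> real (Suc p) * (real n)\<^sup>2" using j by (intro mult_right_mono) auto
      then show "\<bar>?L j - real (mm p) * Pp j\<bar> \<le> real (Suc p) * (real n)\<^sup>2"
        using lag_sum[of j "mm p"] by linarith
    qed (use e0 in auto)
    finally show "\<bar>(?L j - real (mm p) * Pp j) * \<epsilon> ^ j\<bar> \<le> (real (Suc p) * (real n)\<^sup>2) * 1" .
  qed
  also have "\<dots> = real (Suc p) * (real (Suc p) * (real n)\<^sup>2)" by simp
  finally have h: "\<bar>Dd p - real (mm p) * (\<Sum>j\<in>{1..Suc p}. \<epsilon> ^ j * Pp j)\<bar> \<le> real (Suc p) * (real (Suc p) * (real n)\<^sup>2)" .
  have "\<bar>Dd p / real (mm p) - (\<Sum>j\<in>{1..Suc p}. \<epsilon> ^ j * Pp j)\<bar>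
      = \<bar>Dd p - real (mm p) * (\<Sum>j\<in>{1..Suc p}. \<epsilon> ^ j * Pp j)\<bar> / real (mm p)"
    by (rule abs_div_shift[OF mpos])
  also have "\<dots> \<le> real (Suc p) * (real (Suc p) * (real n)\<^sup>2) / real (mm p)"
    using h mpos by (intro divide_right_mono) auto
  also have "\<dots> \<le> (real n)\<^sup>2 / real (Suc p)"
    using P8_bound[of "real (Suc p)" "(real n)\<^sup>2"] by (simp add: mm_def)
  finally show ?thesis .
qed

lemma S_conv: "(\<lambda>p. \<Sum>j\<in>{1..Suc p}. \<epsilon> ^ j * Pp j) \<longlonglongrightarrow> Qc"
proof -
  have sb: "summable (\<lambda>l. real N * (real n)\<^sup>2 * \<epsilon> * \<epsilon> ^ l)"
    using e0 e1 by (intro summable_mult summable_geometric) simp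
  have sf: "summable (\<lambda>l. \<epsilon> ^ Suc l * Pp (Suc l))"
  proof (rule summable_comparison_test[OF _ sb], intro exI allI impI)
    fix l :: nat
    have "\<bar>\<epsilon> ^ Suc l * Pp (Suc l)\<bar> = \<epsilon> ^ Suc l * \<bar>Pp (Suc l)\<bar>" using e0 by (simp add: abs_mult)
    also have "\<dots> \<le> \<epsilon> ^ Suc l * (real N * (real n)\<^sup>2)"
      using Pp_bound e0 by (intro mult_left_mono) auto
    finally show "norm (\<epsilon> ^ Suc l * Pp (Suc l)) \<le> real N * (real n)\<^sup>2 * \<epsilon> * \<epsilon> ^ l"
      by (simp add: algebra_simps)
  qed
  have "(\<lambda>q. \<Sum>l<q. \<epsilon> ^ Suc l * Pp (Suc l)) \<longlonglongrightarrow> Qc"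
    unfolding Qc_def by (rule summable_LIMSEQ[OF sf])
  then have L: "(\<lambda>p. \<Sum>l<Suc p. \<epsilon> ^ Suc l * Pp (Suc l)) \<longlonglongrightarrow> Qc"
    by (rule LIMSEQ_Suc)
  have e: "(\<Sum>l<Suc p. \<epsilon> ^ Suc l * Pp (Suc l)) = (\<Sum>j=1..Suc p. \<epsilon> ^ j * Pp j)" for p
    by (rule sum_bounds_lt_plus1)
  from L show ?thesis unfolding e .
qed

lemma R_conv: "AE \<omega> in M. (\<lambda>p. Rsum (KK p) \<omega> / real (mm p)) \<longlonglongrightarrow> Qc"
  using AE_good
proof eventually_elim
  case (elim \<omega>)
  have inv0: "(\<lambda>p. 1 / real (Suc p)) \<longlonglongrightarrow> 0"
    using LIMSEQ_inverse_real_of_nat by (simp add: inverse_eq_divide)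
  have DdS: "(\<lambda>p. Dd p / real (mm p)) \<longlonglongrightarrow> Qc"
  proof (rule tendsto_close[OF S_conv])
    show "(\<lambda>p. (real n)\<^sup>2 / real (Suc p)) \<longlonglongrightarrow> 0"
      using tendsto_mult[OF tendsto_const[of "(real n)\<^sup>2"] inv0] by simp
    show "\<forall>\<^sub>F p in sequentially. \<bar>Dd p / real (mm p) - (\<Sum>j = 1..Suc p. \<epsilon> ^ j * Pp j)\<bar> \<le> (real n)\<^sup>2 / real (Suc p)"
      by (intro always_eventually allI Dd_close)
  qed
  show ?case
  proof (rule tendsto_close[OF DdS inv0])
    show "\<forall>\<^sub>F p in sequentially. \<bar>Rsum (KK p) \<omega> / real (mm p) - Dd p / real (mm p)\<bar> \<le> 1 / real (Suc p)"
      using elim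
    proof eventually_elim
      case (elim p)
      have mpos: "0 < real (mm p)" by (simp add: mm_def)
      have "\<bar>Rsum (KK p) \<omega> / real (mm p) - Dd p / real (mm p)\<bar> = \<bar>Rsum (KK p) \<omega> - Dd p\<bar> / real (mm p)"
        using abs_div_shift[OF mpos, of "Rsum (KK p) \<omega>" "Dd p / real (mm p)"] mpos by simp
      also have "\<dots> \<le> real (mm p) / real (Suc p) / real (mm p)"
        using good_bound[OF elim] mpos by (intro divide_right_mono) auto
      also have "\<dots> = 1 / real (Suc p)" using mpos by simp
      finally show ?case .
    qed
  qed
qed

end


lemma mod_back: assumes "0 < (N::nat)" "r < N" "d < N" shows "((r + d) mod N + N - r) mod N = d"
proof -
  have "(r + d) mod N + N - r = (r + d) mod N + (N - r)" using assms by simp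
  then have "((r + d) mod N + N - r) mod N = (r + d + (N - r)) mod N" by (simp add: mod_add_left_eq)
  also have "r + d + (N - r) = d + N" using assms by simp
  also have "(d + N) mod N = d" using assms by simp
  finally show ?thesis .
qed

lemma alg: fixes e E P A c :: real
  assumes "e \<noteq> 1" "E \<noteq> 1" "c \<noteq> 0"
  shows "(1 - e) / (2 * c * (1 - E)) * (((1 + E) * P + 2 * A) / (1 - e)) + c = (c\<^sup>2 + P / 2 + (A + E * P) / (1 - E)) / c"
proof -
  have a: "1 - e \<noteq> 0" "1 - E \<noteq> 0" using assms by auto
  have "(1 - e) / (2 * c * (1 - E)) * (((1 + E) * P + 2 * A) / (1 - e)) = ((1 + E) * P + 2 * A) / (2 * c * (1 - E))"
    using a by simp
  also have "\<dots> = (P / 2 + (A + E * P) / (1 - E)) / c"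
    using a assms by (simp add: field_simps)
  finally show ?thesis using assms by (simp add: field_simps power2_eq_square)
qed

context mpl begin

lemma tau_mod: "\<tau> (a mod N) = \<tau> a" by (simp add: \<tau>_def)

lemma Pp_per: "Pp (j + N) = Pp j"
  unfolding Pp_def by (rule sum.cong[OF refl]) (metis add.assoc tau_per)

lemma Pp_N: "Pp N = Pp 0" using Pp_per[of 0] by simp

lemma Pp_sym: assumes "e < N" shows "Pp (N - e) = Pp e"
proof -
  have "Pp (N - e) = (\<Sum>\<rho><N. \<tau> ((\<rho> + e) mod N) * \<tau> ((\<rho> + e) mod N + (N - e)))"
    unfolding Pp_def using sum_mod_shift[OF Npos, of "\<lambda>\<rho>. \<tau> \<rho> * \<tau> (\<rho> + (N - e))" e] by simp
  also have "\<dots> = (\<Sum>\<rho><N. \<tau> (\<rho> + e) * \<tau> \<rho>)"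
  proof (rule sum.cong[OF refl])
    fix \<rho> assume "\<rho> \<in> {..<N}"
    then have "((e + \<rho>) mod N + N - e) mod N = \<rho>" using mod_back[OF Npos assms] by simp
    then have "\<tau> ((\<rho> + e) mod N + (N - e)) = \<tau> \<rho>"
      using assms by (metis tau_mod add.commute Nat.add_diff_assoc less_imp_le)
    then show "\<tau> ((\<rho> + e) mod N) * \<tau> ((\<rho> + e) mod N + (N - e)) = \<tau> (\<rho> + e) * \<tau> \<rho>"
      by (simp add: tau_mod)
  qed
  finally show ?thesis by (simp add: Pp_def mult.commute)
qed

lemma Qc_eq: "Qc = (\<Sum>d<N. \<epsilon> ^ Suc d * Pp (Suc d)) / (1 - \<epsilon> ^ N)"
proof -
  have sb: "summable (\<lambda>l. real N * (real n)\<^sup>2 * \<epsilon> * \<epsilon> ^ l)"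
    using e0 e1 by (intro summable_mult summable_geometric) simp
  have sf: "summable (\<lambda>l. \<epsilon> ^ Suc l * Pp (Suc l))"
  proof (rule summable_comparison_test[OF _ sb], intro exI allI impI)
    fix l :: nat
    have "\<bar>\<epsilon> ^ Suc l * Pp (Suc l)\<bar> = \<epsilon> ^ Suc l * \<bar>Pp (Suc l)\<bar>" using e0 by (simp add: abs_mult)
    also have "\<dots> \<le> \<epsilon> ^ Suc l * (real N * (real n)\<^sup>2)"
      using Pp_bound e0 by (intro mult_left_mono) auto
    finally show "norm (\<epsilon> ^ Suc l * Pp (Suc l)) \<le> real N * (real n)\<^sup>2 * \<epsilon> * \<epsilon> ^ l"
      by (simp add: algebra_simps)
  qed
  show ?thesis unfolding Qc_def
  proof (rule periodic_suminf[OF sf Npos])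
    fix l
    have "Pp (Suc (l + N)) = Pp (Suc l)" using Pp_per[of "Suc l"] by simp
    then show "\<epsilon> ^ Suc (l + N) * Pp (Suc (l + N)) = \<epsilon> ^ N * (\<epsilon> ^ Suc l * Pp (Suc l))"
      by (simp add: power_add)
    show "\<bar>\<epsilon> ^ N\<bar> < 1" using e0 e1 Npos by (simp add: power_less_one_iff)
  qed
qed

lemma quad_eq:
  "quad_form N (mp_M \<epsilon> N) (mp_T \<delta> n N) = (\<Sum>d<N. (\<epsilon> ^ d + \<epsilon> ^ (N - d)) * Pp d) / (1 - \<epsilon>)"
proof -
  have "quad_form N (mp_M \<epsilon> N) (mp_T \<delta> n N) = (\<Sum>r<N. \<Sum>d<N. \<tau> r * mp_m \<epsilon> N d * \<tau> (r + d))"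
    unfolding quad_form_def
  proof (rule sum.cong[OF refl])
    fix r assume r: "r \<in> {..<N}"
    have "(\<Sum>s<N. mp_T \<delta> n N r * mp_M \<epsilon> N r s * mp_T \<delta> n N s)
        = (\<Sum>d<N. mp_T \<delta> n N r * mp_M \<epsilon> N r ((d + r) mod N) * mp_T \<delta> n N ((d + r) mod N))"
      using sum_mod_shift[OF Npos, of "\<lambda>s. mp_T \<delta> n N r * mp_M \<epsilon> N r s * mp_T \<delta> n N s" r] by simp
    also have "\<dots> = (\<Sum>d<N. \<tau> r * mp_m \<epsilon> N d * \<tau> (r + d))"
    proof (rule sum.cong[OF refl])
      fix d assume d: "d \<in> {..<N}"
      have "mp_M \<epsilon> N r ((d + r) mod N) = mp_m \<epsilon> N d"
        unfolding mp_M_def using mod_back[OF Npos, of r d] r d by (simp add: add.commute)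
      then show "mp_T \<delta> n N r * mp_M \<epsilon> N r ((d + r) mod N) * mp_T \<delta> n N ((d + r) mod N) = \<tau> r * mp_m \<epsilon> N d * \<tau> (r + d)"
        using r by (simp add: \<tau>_def add.commute)
    qed
    finally show "(\<Sum>s<N. mp_T \<delta> n N r * mp_M \<epsilon> N r s * mp_T \<delta> n N s) = (\<Sum>d<N. \<tau> r * mp_m \<epsilon> N d * \<tau> (r + d))" .
  qed
  also have "\<dots> = (\<Sum>d<N. mp_m \<epsilon> N d * Pp d)"
    unfolding Pp_def sum_distrib_left by (subst sum.swap) (simp add: mult_ac)
  also have "\<dots> = (\<Sum>d<N. (\<epsilon> ^ d + \<epsilon> ^ (N - d)) * Pp d) / (1 - \<epsilon>)"
    unfolding mp_m_def by (simp add: sum_divide_distrib)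
  finally show ?thesis .
qed

lemma Lambda_eq:
  "(1 - \<epsilon>) / (2 * real n * (1 - \<epsilon> ^ N)) * quad_form N (mp_M \<epsilon> N) (mp_T \<delta> n N) + real n
   = ((real n)\<^sup>2 + (\<Sum>\<rho><N. (\<tau> \<rho>)\<^sup>2) / 2 + Qc) / real n"
proof -
  obtain N' where NN: "N = Suc N'" using Npos by (cases N) auto
  define A where "A = (\<Sum>d\<in>{1..N'}. \<epsilon> ^ d * Pp d)"
  have eN: "\<epsilon> ^ N < 1" using e0 e1 Npos by (simp add: power_less_one_iff)
  have S2: "(\<Sum>\<rho><N. (\<tau> \<rho>)\<^sup>2) = Pp 0" by (simp add: Pp_def power2_eq_square)
  have s1: "(\<Sum>d<N. \<epsilon> ^ d * Pp d) = Pp 0 + A"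
  proof -
    have "(\<Sum>d<Suc N'. \<epsilon> ^ d * Pp d) = \<epsilon> ^ 0 * Pp 0 + (\<Sum>d<N'. \<epsilon> ^ Suc d * Pp (Suc d))"
      by (rule sum.lessThan_Suc_shift)
    also have "(\<Sum>d<N'. \<epsilon> ^ Suc d * Pp (Suc d)) = A"
      unfolding A_def by (rule sum_bounds_lt_plus1)
    finally show ?thesis unfolding NN by simp
  qed
  have s2: "(\<Sum>d<N. \<epsilon> ^ (N - d) * Pp d) = \<epsilon> ^ N * Pp 0 + A"
  proof -
    have "(\<Sum>d<N. \<epsilon> ^ (N - d) * Pp d) = \<epsilon> ^ (N - 0) * Pp 0 + (\<Sum>d<N'. \<epsilon> ^ (N - Suc d) * Pp (Suc d))"
      unfolding NN by (rule sum.lessThan_Suc_shift)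
    then have "(\<Sum>d<N. \<epsilon> ^ (N - d) * Pp d) = \<epsilon> ^ N * Pp 0 + (\<Sum>d<N'. \<epsilon> ^ (N - Suc d) * Pp (Suc d))"
      by (simp only: diff_zero)
    also have "(\<Sum>d<N'. \<epsilon> ^ (N - Suc d) * Pp (Suc d)) = (\<Sum>e\<in>{1..N'}. \<epsilon> ^ e * Pp e)"
    proof (rule sum.reindex_bij_witness[where i="\<lambda>e. N' - e" and j="\<lambda>d. N' - d"])
      fix d assume d: "d \<in> {..<N'}"
      show "N' - (N' - d) = d" using d by simp
      show "N' - d \<in> {1..N'}" using d by simp
      have "Pp (Suc d) = Pp (N - (N' - d))" using d NN by (simp add: Suc_diff_le)
      also have "\<dots> = Pp (N' - d)" using Pp_sym[of "N' - d"] NN by simp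
      finally show "\<epsilon> ^ (N' - d) * Pp (N' - d) = \<epsilon> ^ (N - Suc d) * Pp (Suc d)"
        using NN d by (simp add: Suc_diff_le)
    next
      fix e assume e: "e \<in> {1..N'}"
      show "N' - (N' - e) = e" using e by simp
      show "N' - e \<in> {..<N'}" using e by auto
    qed
    finally show ?thesis by (simp add: A_def)
  qed
  have s3: "(\<Sum>d<N. \<epsilon> ^ Suc d * Pp (Suc d)) = A + \<epsilon> ^ N * Pp 0"
  proof -
    have "(\<Sum>d<N. \<epsilon> ^ Suc d * Pp (Suc d)) = (\<Sum>d\<in>{1..N}. \<epsilon> ^ d * Pp d)"
      by (rule sum_bounds_lt_plus1)
    also have "\<dots> = A + \<epsilon> ^ N * Pp N" unfolding A_def NN by simp
    finally show ?thesis using Pp_N by simp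
  qed
  have q: "quad_form N (mp_M \<epsilon> N) (mp_T \<delta> n N) = ((1 + \<epsilon> ^ N) * Pp 0 + 2 * A) / (1 - \<epsilon>)"
  proof -
    have "(\<Sum>d<N. (\<epsilon> ^ d + \<epsilon> ^ (N - d)) * Pp d) = (\<Sum>d<N. \<epsilon> ^ d * Pp d) + (\<Sum>d<N. \<epsilon> ^ (N - d) * Pp d)"
      by (simp only: distrib_right sum.distrib)
    then show ?thesis unfolding quad_eq s1 s2 by (simp add: distrib_right)
  qed
  have Q: "Qc = (A + \<epsilon> ^ N * Pp 0) / (1 - \<epsilon> ^ N)" unfolding Qc_eq s3 ..
  show ?thesis unfolding q Q S2
    by (rule alg) (use e1 eN npos in auto)
qed

end


lemma alg2: fixes m c C B R :: real assumes m: "0 < m" and c: "0 < c"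
  shows "(C + m * B + R) / ((m + 1) * c) = (C / m + B + R / m) * (m / (m + 1) / c)"
proof -
  have e1: "C / m + B + R / m = (C + m * B + R) / m" using m by (simp add: field_simps)
  have m1: "m + 1 \<noteq> 0" using m by simp
  show ?thesis unfolding e1 using m m1 c by simp
qed

context mpl begin

definition FF :: "'a \<Rightarrow> real \<Rightarrow> real" where
  "FF \<omega> T = integral {0..T} (mp_aoi \<delta> n N X \<omega>)"

lemma aoi_integrable: "0 \<le> T \<Longrightarrow> mp_aoi \<delta> n N X \<omega> integrable_on {0..T}"
proof -
  assume T: "0 \<le> T"
  obtain K where K: "T < r K" using r_unbounded by blast
  have "mp_aoi \<delta> n N X \<omega> integrable_on {0..r K}" using total_int by blast
  then show ?thesis by (rule integrable_subinterval_real) (use K in auto)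
qed

lemma FF_nonneg: "0 \<le> a \<Longrightarrow> 0 \<le> FF \<omega> a"
  unfolding FF_def by (rule integral_nonneg[OF aoi_integrable]) (auto intro: aoi_nonneg)

lemma FF_mono: "0 \<le> a \<Longrightarrow> a \<le> b \<Longrightarrow> FF \<omega> a \<le> FF \<omega> b"
proof -
  assume a: "0 \<le> a" and ab: "a \<le> b"
  have ib: "mp_aoi \<delta> n N X \<omega> integrable_on {0..b}" using aoi_integrable a ab by simp
  have "integral {0..a} (mp_aoi \<delta> n N X \<omega>) + integral {a..b} (mp_aoi \<delta> n N X \<omega>) = integral {0..b} (mp_aoi \<delta> n N X \<omega>)"
    by (rule Henstock_Kurzweil_Integration.integral_combine[OF a ab ib])
  moreover have "0 \<le> integral {a..b} (mp_aoi \<delta> n N X \<omega>)"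
  proof (rule integral_nonneg)
    show "mp_aoi \<delta> n N X \<omega> integrable_on {a..b}" by (rule integrable_subinterval_real[OF ib]) (use a in auto)
  qed (use a in \<open>auto intro: aoi_nonneg\<close>)
  ultimately show ?thesis unfolding FF_def by linarith
qed

lemma FF_rK: "FF \<omega> (r K) = (real n)\<^sup>2 / 2 + (\<Sum>k<K. piece k \<omega>)"
  unfolding FF_def by (rule integral_unique[OF total_int])

lemma FF_cc:
  assumes s: "x s \<omega>" and K: "s \<le> K"
  shows "FF \<omega> (r K) = ((real n)\<^sup>2 / 2 + (\<Sum>k<s. piece k \<omega> - cc k \<omega>)) + (\<Sum>k<K. cc k \<omega>)"
proof -
  have "(\<Sum>k<K. piece k \<omega> - cc k \<omega>) = (\<Sum>k<s. piece k \<omega> - cc k \<omega>)"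
    by (rule sum.mono_neutral_right) (use K piece_cc[OF s] in auto)
  then show ?thesis unfolding FF_rK by (simp add: sum_subtractf)
qed

lemma main_AE:
  "AE \<omega> in M. ((\<lambda>T. integral {0..T} (mp_aoi \<delta> n N X \<omega>) / T)
      \<longlongrightarrow> (1 - \<epsilon>) / (2 * real n * (1 - \<epsilon> ^ N)) * quad_form N (mp_M \<epsilon> N) (mp_T \<delta> n N) + real n) at_top"
  using AE_succ[of 0] R_conv
proof eventually_elim
  case (elim \<omega>)
  then obtain s where s: "x s \<omega>" by auto
  define sq where "sq p = r (KK p)" for p
  have sq_eq: "sq p = real (mm p + 1) * real n" for p
    unfolding sq_def KK_def by (rule r_multN)
  define B where "B = (real n)\<^sup>2 + (\<Sum>\<rho><N. (\<tau> \<rho>)\<^sup>2) / 2"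
  define Cst where "Cst = (real n)\<^sup>2 / 2 + (\<Sum>k<s. piece k \<omega> - cc k \<omega>)"
  have mmge: "Suc p \<le> mm p" for p unfolding mm_def by (rule self_le_power) auto
  have mmK: "mm p \<le> KK p" for p unfolding KK_def using Npos by simp
  have ev: "eventually (\<lambda>p. FF \<omega> (sq p) / sq p = (Cst / real (mm p) + B + Rsum (KK p) \<omega> / real (mm p)) * (real (mm p) / (real (mm p) + 1) / real n)) sequentially"
    using eventually_ge_at_top[of s]
  proof eventually_elim
    case (elim p)
    have sK: "s \<le> KK p" using mmge[of p] mmK[of p] elim by linarith
    have "FF \<omega> (sq p) = Cst + (\<Sum>k<KK p. cc k \<omega>)" unfolding sq_def Cst_def by (rule FF_cc[OF s sK])
    also have "(\<Sum>k<KK p. cc k \<omega>) = real (mm p) * B + Rsum (KK p) \<omega>"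
      unfolding cc_sum KK_def det_sum B_def ..
    finally have F: "FF \<omega> (sq p) = Cst + real (mm p) * B + Rsum (KK p) \<omega>" by simp
    have mpos: "0 < real (mm p)" using mmge[of p] by simp
    show ?case unfolding F unfolding sq_eq of_nat_add of_nat_1 by (rule alg2) (use mpos npos in auto)
  qed
  have l1: "(\<lambda>p. 1 / real (mm p)) \<longlonglongrightarrow> 0" unfolding mm_def by real_asymp
  have l2: "(\<lambda>p. real (mm p) / (real (mm p) + 1)) \<longlonglongrightarrow> 1" unfolding mm_def by real_asymp
  have lim: "(\<lambda>p. FF \<omega> (sq p) / sq p) \<longlonglongrightarrow> (0 + B + Qc) * (1 / real n)"
  proof (rule Lim_transform_eventually[OF _ ev[THEN eventually_mono, OF sym]])
    show "(\<lambda>p. (Cst / real (mm p) + B + Rsum (KK p) \<omega> / real (mm p)) * (real (mm p) / (real (mm p) + 1) / real n))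
        \<longlonglongrightarrow> (0 + B + Qc) * (1 / real n)"
    proof (intro tendsto_intros elim(2) l2)
      show "(\<lambda>p. Cst / real (mm p)) \<longlonglongrightarrow> 0" using tendsto_mult[OF tendsto_const[of Cst] l1] by simp
    qed (use npos in simp)
  qed
  have "((\<lambda>T. FF \<omega> T / T) \<longlongrightarrow> (0 + B + Qc) * (1 / real n)) at_top"
  proof (rule squeeze_ratio[where s=sq])
    show "\<And>a b. 0 \<le> a \<Longrightarrow> a \<le> b \<Longrightarrow> FF \<omega> a \<le> FF \<omega> b" by (rule FF_mono)
    show "\<And>a. 0 \<le> a \<Longrightarrow> 0 \<le> FF \<omega> a" by (rule FF_nonneg)
    show "\<And>p. 0 < sq p" using npos by (simp add: sq_eq)
    show "\<And>p q. p \<le> q \<Longrightarrow> sq p \<le> sq q" unfolding sq_def KK_def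
      by (intro r_mono mult_le_mono1) (simp add: mm_def power_mono)
    show "\<And>T. \<exists>p. T < sq p"
    proof -
      fix T
      obtain p :: nat where p: "T / real n < real p" using reals_Archimedean2 by blast
      have "T < real p * real n" using p npos by (simp add: field_simps)
      also have "\<dots> \<le> sq p" unfolding sq_eq using mmge[of p] npos by (intro mult_right_mono) auto
      finally show "\<exists>p. T < sq p" by blast
    qed
    have "(\<lambda>p. (1 + real (mm (Suc p))) / (1 + real (mm p))) \<longlonglongrightarrow> 1" unfolding mm_def by real_asymp
    then show "(\<lambda>p. sq (Suc p) / sq p) \<longlonglongrightarrow> 1" using npos by (simp add: sq_eq)
  qed (rule lim)
  moreover have "(0 + B + Qc) * (1 / real n) = (1 - \<epsilon>) / (2 * real n * (1 - \<epsilon> ^ N)) * quad_form N (mp_M \<epsilon> N) (mp_T \<delta> n N) + real n"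
    unfolding Lambda_eq B_def by simp
  ultimately show ?case by (simp add: FF_def)
qed

end


theorem mainTheorem5:
  fixes M :: "'a measure" and X :: "nat \<times> nat \<Rightarrow> 'a \<Rightarrow> bool"
    and N n :: nat and \<delta> :: "nat \<Rightarrow> real" and \<epsilon> :: real
  assumes "prob_space M"
    and "N \<ge> 1" and "n > 0"
    and "\<delta> 0 = 0"
    and "\<And>i. i + 1 < N \<Longrightarrow> \<delta> i \<le> \<delta> (i + 1)"
    and "\<delta> (N - 1) < real n"
    and "0 < \<epsilon>" and "\<epsilon> < 1"
    and "prob_space.indep_vars M (\<lambda>_. count_space UNIV) X ({..<N} \<times> UNIV)"
    and "\<And>i m. i < N \<Longrightarrow> measure M {\<omega> \<in> space M. X (i, m) \<omega>} = 1 - \<epsilon>"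
  shows "(\<forall>i<N. cond_mean M {\<omega> \<in> space M. X (i, 0) \<omega>} (mp_Y \<delta> n N X i)
             = (\<Sum>j<N. \<epsilon> ^ j * mp_T \<delta> n N ((i + j) mod N)) / (1 - \<epsilon> ^ N))
       \<and> (\<Sum>i<N. cond_mean M {\<omega> \<in> space M. X (i, 0) \<omega>} (mp_Y \<delta> n N X i))
             = real n / (1 - \<epsilon>)
       \<and> (AE \<omega> in M. ((\<lambda>T. integral {0..T} (mp_aoi \<delta> n N X \<omega>) / T)
             \<longlongrightarrow> (1 - \<epsilon>) / (2 * real n * (1 - \<epsilon> ^ N)) * quad_form N (mp_M \<epsilon> N) (mp_T \<delta> n N)
                 + real n) at_top)"
proof -
  have "mpl M X N n \<delta> \<epsilon>"
    unfolding mpl_def mpl_axioms_def using assms by auto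
  then interpret mpl M X N n \<delta> \<epsilon> .
  show ?thesis using cond_mean_Y sum_cond_mean main_AE by auto
qed

end
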